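(* Let $\Delta^3_6$ be the pure $3$-dimensional simplicial complex on the $12$ vertices $\{\pm1,\pm2,\dots,\pm6\}$ whose $48$ facets are the following $24$ four-element sets together with their antipodal images (the image of a set $F$ under $x\mapsto -x$): $\{1,2,5,6\}$, $\{-1,-2,5,6\}$, $\{2,3,5,6\}$, $\{-2,-3,5,6\}$, $\{3,4,5,6\}$, $\{-3,-4,5,6\}$, $\{1,-4,5,6\}$, $\{1,-4,-5,6\}$, $\{1,-4,-5,-6\}$, $\{1,2,3,5\}$, $\{-1,-2,3,5\}$, $\{1,-2,3,5\}$, $\{1,2,4,6\}$, $\{-1,-2,4,6\}$, $\{2,3,4,6\}$, $\{-2,-3,4,6\}$, $\{1,-3,4,6\}$, $\{2,3,4,-5\}$, $\{-1,2,4,-5\}$, $\{3,4,5,-6\}$, $\{-1,3,5,-6\}$, $\{1,2,-3,4\}$, $\{1,2,3,-4\}$, $\{1,-2,3,-4\}$. Then $\Delta^3_6$ (which is a simplicial $3$-sphere) is not polytopal: there is no simplicial convex $4$-polytope whose boundary complex is combinatorially isomorphic to $\Delta^3_6$.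
   Context: This $\Delta^3_6$ is a member of Jockusch's family of centrally symmetric simplicial $3$-spheres. A simplicial $(d-1)$-sphere is called polytopal if it is isomorphic to the boundary complex of a simplicial convex $d$-polytope; here $d=4$. *)

theory Defs
  imports "HOL-Analysis.Analysis"
begin

definition Delta_base :: "int set set" where
  "Delta_base = {
     {1,2,5,6}, {-1,-2,5,6}, {2,3,5,6}, {-2,-3,5,6}, {3,4,5,6}, {-3,-4,5,6},
     {1,-4,5,6}, {1,-4,-5,6}, {1,-4,-5,-6}, {1,2,3,5}, {-1,-2,3,5}, {1,-2,3,5},
     {1,2,4,6}, {-1,-2,4,6}, {2,3,4,6}, {-2,-3,4,6}, {1,-3,4,6}, {2,3,4,-5},
     {-1,2,4,-5}, {3,4,5,-6}, {-1,3,5,-6}, {1,2,-3,4}, {1,2,3,-4}, {1,-2,3,-4}}"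

definition Delta_facets :: "int set set" where
  "Delta_facets = Delta_base \<union> (\<lambda>F. uminus ` F) ` Delta_base"

definition Delta_vertices :: "int set" where
  "Delta_vertices = {-6..6} - {0}"

definition Delta_faces :: "int set set" where
  "Delta_faces = {S. \<exists>F\<in>Delta_facets. S \<subseteq> F}"

definition simplicial_polytope :: "'a::euclidean_space set \<Rightarrow> bool" where
  "simplicial_polytope P \<longleftrightarrow> polytope P \<and> (\<forall>F. F facet_of P \<longrightarrow> (\<exists>n. n simplex F))"

definition boundary_complex_iso :: "'b set \<Rightarrow> 'b set set \<Rightarrow> 'a::euclidean_space set \<Rightarrow> bool" where
  "boundary_complex_iso V K P \<longleftrightarrow>
     (\<exists>f. bij_betw f V {v. v extreme_point_of P} \<and>
          (\<forall>S. S \<subseteq> V \<longrightarrow>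
               (S \<in> K \<longleftrightarrow> (\<exists>F. F face_of P \<and> F \<noteq> P \<and> f ` S = {v. v extreme_point_of F}))))"

end

theory Submission
  imports Defs
begin

lemma Delta_facets_lit: "Delta_facets = {{(-1),(-2),(-5),(-6)}, {1,2,(-5),(-6)}, {(-2),(-3),(-5),(-6)}, {2,3,(-5),(-6)}, {(-3),(-4),(-5),(-6)}, {3,4,(-5),(-6)}, {(-1),4,(-5),(-6)}, {(-1),4,5,(-6)}, {(-1),4,5,6}, {(-1),(-2),(-3),(-5)}, {1,2,(-3),(-5)}, {(-1),2,(-3),(-5)}, {(-1),(-2),(-4),(-6)}, {1,2,(-4),(-6)}, {(-2),(-3),(-4),(-6)}, {2,3,(-4),(-6)}, {(-1),3,(-4),(-6)}, {(-2),(-3),(-4),5}, {1,(-2),(-4),5}, {(-3),(-4),(-5),6}, {1,(-3),(-5),6}, {(-1),(-2),3,(-4)}, {(-1),(-2),(-3),4}, {(-1),2,(-3),4}, {1,2,5,6}, {(-1),(-2),5,6}, {2,3,5,6}, {(-2),(-3),5,6}, {3,4,5,6}, {(-3),(-4),5,6}, {1,(-4),5,6}, {1,(-4),(-5),6}, {1,(-4),(-5),(-6)}, {1,2,3,5}, {(-1),(-2),3,5}, {1,(-2),3,5}, {1,2,4,6}, {(-1),(-2),4,6}, {2,3,4,6}, {(-2),(-3),4,6}, {1,(-3),4,6}, {2,3,4,(-5)}, {(-1),2,4,(-5)}, {3,4,5,(-6)}, {(-1),3,5,(-6)}, {1,2,(-3),4}, {1,2,3,(-4)}, {1,(-2),3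,(-4)}}"
  by (simp add: Delta_facets_def Delta_base_def)

lemma pm1: "0 < x*y \<Longrightarrow> 0 < x \<Longrightarrow> 0 < (y::real)" by (simp add: zero_less_mult_iff)
lemma pm2: "0 < x*y \<Longrightarrow> x < 0 \<Longrightarrow> (y::real) < 0" by (simp add: zero_less_mult_iff)
lemma pm3: "x*y < 0 \<Longrightarrow> 0 < x \<Longrightarrow> (y::real) < 0" by (simp add: mult_less_0_iff)
lemma pm4: "x*y < 0 \<Longrightarrow> x < 0 \<Longrightarrow> 0 < (y::real)" by (simp add: mult_less_0_iff)
lemma qm1: "0 < x*y \<Longrightarrow> 0 < y \<Longrightarrow> 0 < (x::real)" by (simp add: zero_less_mult_iff)
lemma qm2: "0 < x*y \<Longrightarrow> y < 0 \<Longrightarrow> (x::real) < 0" by (simp add: zero_less_mult_iff)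
lemma qm3: "x*y < 0 \<Longrightarrow> 0 < y \<Longrightarrow> (x::real) < 0" by (simp add: mult_less_0_iff)
lemma qm4: "x*y < 0 \<Longrightarrow> y < 0 \<Longrightarrow> 0 < (x::real)" by (simp add: mult_less_0_iff)

lemma core:
  fixes E :: "int \<Rightarrow> int \<Rightarrow> int \<Rightarrow> int \<Rightarrow> int \<Rightarrow> real"
  assumes s1: "\<And>a b c d e. E a b c d e = - E b a c d e"
    and s2: "\<And>a b c d e. E a b c d e = - E a c b d e"
    and s3: "\<And>a b c d e. E a b c d e = - E a b d c e"
    and s4: "\<And>a b c d e. E a b c d e = - E a b c e d"
    and gp: "\<And>x y z a b c d. E x y z a b * E x y z c d - E x y z a c * E x y z b d + E x y z a d * E x y z b c = 0"
    and fac: "\<And>i1 i2 i3 i4 j k. {i1,i2,i3,i4} \<in> Delta_facets \<Longrightarrow> distinct [i1,i2,i3,i4] \<Longrightarrow>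
       j \<in> Delta_vertices - {i1,i2,i3,i4} \<Longrightarrow> k \<in> Delta_vertices - {i1,i2,i3,i4} \<Longrightarrow> 0 < E i1 i2 i3 i4 j * E i1 i2 i3 i4 k"
    and base: "0 < E 1 2 3 5 6"
  shows False
proof -
  note k_1_2_3_5_6 = base
  have pq1: "E 1 2 5 6 3 = E 1 2 3 5 6" using s4[of 1 2 5 6 3] s3[of 1 2 5 3 6] by linarith
  have u1: "0 < E 1 2 5 6 3" using pq1 k_1_2_3_5_6 by linarith
  have u2: "0 < E 1 2 5 6 3 * E 1 2 5 6 4" by (rule fac) (simp_all add: Delta_facets_lit Delta_vertices_def)
  have u3: "0 < E 1 2 5 6 4" by (rule pm1[OF u2 u1])
  have pq2: "E 1 2 5 6 4 = E 1 2 4 5 6" using s4[of 1 2 5 6 4] s3[of 1 2 5 4 6] by linarith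
  have k_1_2_4_5_6: "0 < E 1 2 4 5 6" using u3 pq2 by linarith
  have pq3: "E 1 2 5 6 3 = E 1 2 3 5 6" using s4[of 1 2 5 6 3] s3[of 1 2 5 3 6] by linarith
  have u4: "0 < E 1 2 5 6 3" using pq3 k_1_2_3_5_6 by linarith
  have u5: "0 < E 1 2 5 6 3 * E 1 2 5 6 (-1)" by (rule fac) (simp_all add: Delta_facets_lit Delta_vertices_def)
  have u6: "0 < E 1 2 5 6 (-1)" by (rule pm1[OF u5 u4])
  have pq4: "E 1 2 5 6 (-1) = E (-1) 1 2 5 6" using s4[of 1 2 5 6 "-1"] s3[of 1 2 5 "-1" 6] s2[of 1 2 "-1" 5 6] s1[of 1 "-1" 2 5 6] by linarith
  have k_m1_1_2_5_6: "0 < E (-1) 1 2 5 6" using u6 pq4 by linarith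
  have pq5: "E 1 2 5 6 3 = E 1 2 3 5 6" using s4[of 1 2 5 6 3] s3[of 1 2 5 3 6] by linarith
  have u7: "0 < E 1 2 5 6 3" using pq5 k_1_2_3_5_6 by linarith
  have u8: "0 < E 1 2 5 6 3 * E 1 2 5 6 (-2)" by (rule fac) (simp_all add: Delta_facets_lit Delta_vertices_def)
  have u9: "0 < E 1 2 5 6 (-2)" by (rule pm1[OF u8 u7])
  have pq6: "E 1 2 5 6 (-2) = E (-2) 1 2 5 6" using s4[of 1 2 5 6 "-2"] s3[of 1 2 5 "-2" 6] s2[of 1 2 "-2" 5 6] s1[of 1 "-2" 2 5 6] by linarith
  have k_m2_1_2_5_6: "0 < E (-2) 1 2 5 6" using u9 pq6 by linarith
  have pq7: "E 1 2 5 6 3 = E 1 2 3 5 6" using s4[of 1 2 5 6 3] s3[of 1 2 5 3 6] by linarith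
  have u10: "0 < E 1 2 5 6 3" using pq7 k_1_2_3_5_6 by linarith
  have u11: "0 < E 1 2 5 6 3 * E 1 2 5 6 (-3)" by (rule fac) (simp_all add: Delta_facets_lit Delta_vertices_def)
  have u12: "0 < E 1 2 5 6 (-3)" by (rule pm1[OF u11 u10])
  have pq8: "E 1 2 5 6 (-3) = E (-3) 1 2 5 6" using s4[of 1 2 5 6 "-3"] s3[of 1 2 5 "-3" 6] s2[of 1 2 "-3" 5 6] s1[of 1 "-3" 2 5 6] by linarith
  have k_m3_1_2_5_6: "0 < E (-3) 1 2 5 6" using u12 pq8 by linarith
  have pq9: "E 1 2 5 6 3 = E 1 2 3 5 6" using s4[of 1 2 5 6 3] s3[of 1 2 5 3 6] by linarith
  have u13: "0 < E 1 2 5 6 3" using pq9 k_1_2_3_5_6 by linarith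
  have u14: "0 < E 1 2 5 6 3 * E 1 2 5 6 (-4)" by (rule fac) (simp_all add: Delta_facets_lit Delta_vertices_def)
  have u15: "0 < E 1 2 5 6 (-4)" by (rule pm1[OF u14 u13])
  have pq10: "E 1 2 5 6 (-4) = E (-4) 1 2 5 6" using s4[of 1 2 5 6 "-4"] s3[of 1 2 5 "-4" 6] s2[of 1 2 "-4" 5 6] s1[of 1 "-4" 2 5 6] by linarith
  have k_m4_1_2_5_6: "0 < E (-4) 1 2 5 6" using u15 pq10 by linarith
  have pq11: "E 1 2 5 6 3 = E 1 2 3 5 6" using s4[of 1 2 5 6 3] s3[of 1 2 5 3 6] by linarith
  have u16: "0 < E 1 2 5 6 3" using pq11 k_1_2_3_5_6 by linarith
  have u17: "0 < E 1 2 5 6 3 * E 1 2 5 6 (-5)" by (rule fac) (simp_all add: Delta_facets_lit Delta_vertices_def)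
  have u18: "0 < E 1 2 5 6 (-5)" by (rule pm1[OF u17 u16])
  have pq12: "E 1 2 5 6 (-5) = E (-5) 1 2 5 6" using s4[of 1 2 5 6 "-5"] s3[of 1 2 5 "-5" 6] s2[of 1 2 "-5" 5 6] s1[of 1 "-5" 2 5 6] by linarith
  have k_m5_1_2_5_6: "0 < E (-5) 1 2 5 6" using u18 pq12 by linarith
  have pq13: "E 2 3 5 6 1 = E 1 2 3 5 6" using s4[of 2 3 5 6 1] s3[of 2 3 5 1 6] s2[of 2 3 1 5 6] s1[of 2 1 3 5 6] by linarith
  have u19: "0 < E 2 3 5 6 1" using pq13 k_1_2_3_5_6 by linarith
  have u20: "0 < E 2 3 5 6 1 * E 2 3 5 6 4" by (rule fac) (simp_all add: Delta_facets_lit Delta_vertices_def)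
  have u21: "0 < E 2 3 5 6 4" by (rule pm1[OF u20 u19])
  have pq14: "E 2 3 5 6 4 = E 2 3 4 5 6" using s4[of 2 3 5 6 4] s3[of 2 3 5 4 6] by linarith
  have k_2_3_4_5_6: "0 < E 2 3 4 5 6" using u21 pq14 by linarith
  have pq15: "E 3 4 5 6 2 = E 2 3 4 5 6" using s4[of 3 4 5 6 2] s3[of 3 4 5 2 6] s2[of 3 4 2 5 6] s1[of 3 2 4 5 6] by linarith
  have u22: "0 < E 3 4 5 6 2" using pq15 k_2_3_4_5_6 by linarith
  have u23: "0 < E 3 4 5 6 2 * E 3 4 5 6 1" by (rule fac) (simp_all add: Delta_facets_lit Delta_vertices_def)
  have u24: "0 < E 3 4 5 6 1" by (rule pm1[OF u23 u22])
  have pq16: "E 3 4 5 6 1 = E 1 3 4 5 6" using s4[of 3 4 5 6 1] s3[of 3 4 5 1 6] s2[of 3 4 1 5 6] s1[of 3 1 4 5 6] by linarith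
  have k_1_3_4_5_6: "0 < E 1 3 4 5 6" using u24 pq16 by linarith
  have pq17: "E 3 4 5 6 2 = E 2 3 4 5 6" using s4[of 3 4 5 6 2] s3[of 3 4 5 2 6] s2[of 3 4 2 5 6] s1[of 3 2 4 5 6] by linarith
  have u25: "0 < E 3 4 5 6 2" using pq17 k_2_3_4_5_6 by linarith
  have u26: "0 < E 3 4 5 6 2 * E 3 4 5 6 (-1)" by (rule fac) (simp_all add: Delta_facets_lit Delta_vertices_def)
  have u27: "0 < E 3 4 5 6 (-1)" by (rule pm1[OF u26 u25])
  have pq18: "E 3 4 5 6 (-1) = E (-1) 3 4 5 6" using s4[of 3 4 5 6 "-1"] s3[of 3 4 5 "-1" 6] s2[of 3 4 "-1" 5 6] s1[of 3 "-1" 4 5 6] by linarith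
  have k_m1_3_4_5_6: "0 < E (-1) 3 4 5 6" using u27 pq18 by linarith
  have pq19: "E 3 4 5 6 2 = E 2 3 4 5 6" using s4[of 3 4 5 6 2] s3[of 3 4 5 2 6] s2[of 3 4 2 5 6] s1[of 3 2 4 5 6] by linarith
  have u28: "0 < E 3 4 5 6 2" using pq19 k_2_3_4_5_6 by linarith
  have u29: "0 < E 3 4 5 6 2 * E 3 4 5 6 (-6)" by (rule fac) (simp_all add: Delta_facets_lit Delta_vertices_def)
  have u30: "0 < E 3 4 5 6 (-6)" by (rule pm1[OF u29 u28])
  have pq20: "E 3 4 5 6 (-6) = E (-6) 3 4 5 6" using s4[of 3 4 5 6 "-6"] s3[of 3 4 5 "-6" 6] s2[of 3 4 "-6" 5 6] s1[of 3 "-6" 4 5 6] by linarith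
  have k_m6_3_4_5_6: "0 < E (-6) 3 4 5 6" using u30 pq20 by linarith
  have pq21: "E 1 (-4) 5 6 2 = - E (-4) 1 2 5 6" using s1[of 1 "-4" 5 6 2] s4[of "-4" 1 5 6 2] s3[of "-4" 1 5 2 6] by linarith
  have u31: "E 1 (-4) 5 6 2 < 0" using pq21 k_m4_1_2_5_6 by linarith
  have u32: "0 < E 1 (-4) 5 6 2 * E 1 (-4) 5 6 (-5)" by (rule fac) (simp_all add: Delta_facets_lit Delta_vertices_def)
  have u33: "E 1 (-4) 5 6 (-5) < 0" by (rule pm2[OF u32 u31])
  have pq22: "E 1 (-4) 5 6 (-5) = - E (-5) (-4) 1 5 6" using s1[of 1 "-4" 5 6 "-5"] s4[of "-4" 1 5 6 "-5"] s3[of "-4" 1 5 "-5" 6] s2[of "-4" 1 "-5" 5 6] s1[of "-4" "-5" 1 5 6] by linarith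
  have k_m5_m4_1_5_6: "0 < E (-5) (-4) 1 5 6" using u33 pq22 by linarith
  have pq23: "E 1 (-4) (-5) 6 5 = E (-5) (-4) 1 5 6" using s1[of 1 "-4" "-5" 6 5] s2[of "-4" 1 "-5" 6 5] s4[of "-4" "-5" 1 6 5] s1[of "-4" "-5" 1 5 6] by linarith
  have u34: "0 < E 1 (-4) (-5) 6 5" using pq23 k_m5_m4_1_5_6 by linarith
  have u35: "0 < E 1 (-4) (-5) 6 5 * E 1 (-4) (-5) 6 (-6)" by (rule fac) (simp_all add: Delta_facets_lit Delta_vertices_def)
  have u36: "0 < E 1 (-4) (-5) 6 (-6)" by (rule pm1[OF u35 u34])
  have pq24: "E 1 (-4) (-5) 6 (-6) = - E (-6) (-5) (-4) 1 6" using s1[of 1 "-4" "-5" 6 "-6"] s2[of "-4" 1 "-5" 6 "-6"] s4[of "-4" "-5" 1 6 "-6"] s1[of "-4" "-5" 1 "-6" 6] s3[of "-5" "-4" 1 "-6" 6] s2[of "-5" "-4" "-6" 1 6] s1[of "-5" "-6" "-4" 1 6] by linarith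
  have k_m6_m5_m4_1_6: "E (-6) (-5) (-4) 1 6 < 0" using u36 pq24 by linarith
  have pq25: "E 1 (-4) (-5) (-6) 6 = E (-6) (-5) (-4) 1 6" using s1[of 1 "-4" "-5" "-6" 6] s2[of "-4" 1 "-5" "-6" 6] s3[of "-4" "-5" 1 "-6" 6] s1[of "-4" "-5" "-6" 1 6] s2[of "-5" "-4" "-6" 1 6] s1[of "-5" "-6" "-4" 1 6] by linarith
  have u37: "E 1 (-4) (-5) (-6) 6 < 0" using pq25 k_m6_m5_m4_1_6 by linarith
  have u38: "0 < E 1 (-4) (-5) (-6) 6 * E 1 (-4) (-5) (-6) 2" by (rule fac) (simp_all add: Delta_facets_lit Delta_vertices_def)
  have u39: "E 1 (-4) (-5) (-6) 2 < 0" by (rule pm2[OF u38 u37])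
  have pq26: "E 1 (-4) (-5) (-6) 2 = E (-6) (-5) (-4) 1 2" using s1[of 1 "-4" "-5" "-6" 2] s2[of "-4" 1 "-5" "-6" 2] s3[of "-4" "-5" 1 "-6" 2] s1[of "-4" "-5" "-6" 1 2] s2[of "-5" "-4" "-6" 1 2] s1[of "-5" "-6" "-4" 1 2] by linarith
  have k_m6_m5_m4_1_2: "E (-6) (-5) (-4) 1 2 < 0" using u39 pq26 by linarith
  have u40: "0 < E 1 2 3 5 6 * E 1 2 3 5 4" by (rule fac) (simp_all add: Delta_facets_lit Delta_vertices_def)
  have u41: "0 < E 1 2 3 5 4" by (rule pm1[OF u40 k_1_2_3_5_6])
  have pq27: "E 1 2 3 5 4 = - E 1 2 3 4 5" using s4[of 1 2 3 5 4] by linarith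
  have k_1_2_3_4_5: "E 1 2 3 4 5 < 0" using u41 pq27 by linarith
  have u42: "0 < E 1 2 3 5 6 * E 1 2 3 5 (-1)" by (rule fac) (simp_all add: Delta_facets_lit Delta_vertices_def)
  have u43: "0 < E 1 2 3 5 (-1)" by (rule pm1[OF u42 k_1_2_3_5_6])
  have pq28: "E 1 2 3 5 (-1) = E (-1) 1 2 3 5" using s4[of 1 2 3 5 "-1"] s3[of 1 2 3 "-1" 5] s2[of 1 2 "-1" 3 5] s1[of 1 "-1" 2 3 5] by linarith
  have k_m1_1_2_3_5: "0 < E (-1) 1 2 3 5" using u43 pq28 by linarith
  have u44: "0 < E 1 2 3 5 6 * E 1 2 3 5 (-3)" by (rule fac) (simp_all add: Delta_facets_lit Delta_vertices_def)
  have u45: "0 < E 1 2 3 5 (-3)" by (rule pm1[OF u44 k_1_2_3_5_6])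
  have pq29: "E 1 2 3 5 (-3) = E (-3) 1 2 3 5" using s4[of 1 2 3 5 "-3"] s3[of 1 2 3 "-3" 5] s2[of 1 2 "-3" 3 5] s1[of 1 "-3" 2 3 5] by linarith
  have k_m3_1_2_3_5: "0 < E (-3) 1 2 3 5" using u45 pq29 by linarith
  have u46: "0 < E 1 2 3 5 6 * E 1 2 3 5 (-4)" by (rule fac) (simp_all add: Delta_facets_lit Delta_vertices_def)
  have u47: "0 < E 1 2 3 5 (-4)" by (rule pm1[OF u46 k_1_2_3_5_6])
  have pq30: "E 1 2 3 5 (-4) = E (-4) 1 2 3 5" using s4[of 1 2 3 5 "-4"] s3[of 1 2 3 "-4" 5] s2[of 1 2 "-4" 3 5] s1[of 1 "-4" 2 3 5] by linarith
  have k_m4_1_2_3_5: "0 < E (-4) 1 2 3 5" using u47 pq30 by linarith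
  have u48: "0 < E 1 2 3 5 6 * E 1 2 3 5 (-5)" by (rule fac) (simp_all add: Delta_facets_lit Delta_vertices_def)
  have u49: "0 < E 1 2 3 5 (-5)" by (rule pm1[OF u48 k_1_2_3_5_6])
  have pq31: "E 1 2 3 5 (-5) = E (-5) 1 2 3 5" using s4[of 1 2 3 5 "-5"] s3[of 1 2 3 "-5" 5] s2[of 1 2 "-5" 3 5] s1[of 1 "-5" 2 3 5] by linarith
  have k_m5_1_2_3_5: "0 < E (-5) 1 2 3 5" using u49 pq31 by linarith
  have u50: "0 < E 1 2 3 5 6 * E 1 2 3 5 (-6)" by (rule fac) (simp_all add: Delta_facets_lit Delta_vertices_def)
  have u51: "0 < E 1 2 3 5 (-6)" by (rule pm1[OF u50 k_1_2_3_5_6])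
  have pq32: "E 1 2 3 5 (-6) = E (-6) 1 2 3 5" using s4[of 1 2 3 5 "-6"] s3[of 1 2 3 "-6" 5] s2[of 1 2 "-6" 3 5] s1[of 1 "-6" 2 3 5] by linarith
  have k_m6_1_2_3_5: "0 < E (-6) 1 2 3 5" using u51 pq32 by linarith
  have pq33: "E 1 2 4 6 5 = - E 1 2 4 5 6" using s4[of 1 2 4 6 5] by linarith
  have u52: "E 1 2 4 6 5 < 0" using pq33 k_1_2_4_5_6 by linarith
  have u53: "0 < E 1 2 4 6 5 * E 1 2 4 6 3" by (rule fac) (simp_all add: Delta_facets_lit Delta_vertices_def)
  have u54: "E 1 2 4 6 3 < 0" by (rule pm2[OF u53 u52])
  have pq34: "E 1 2 4 6 3 = E 1 2 3 4 6" using s4[of 1 2 4 6 3] s3[of 1 2 4 3 6] by linarith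
  have k_1_2_3_4_6: "E 1 2 3 4 6 < 0" using u54 pq34 by linarith
  have pq35: "E 1 2 4 6 5 = - E 1 2 4 5 6" using s4[of 1 2 4 6 5] by linarith
  have u55: "E 1 2 4 6 5 < 0" using pq35 k_1_2_4_5_6 by linarith
  have u56: "0 < E 1 2 4 6 5 * E 1 2 4 6 (-1)" by (rule fac) (simp_all add: Delta_facets_lit Delta_vertices_def)
  have u57: "E 1 2 4 6 (-1) < 0" by (rule pm2[OF u56 u55])
  have pq36: "E 1 2 4 6 (-1) = E (-1) 1 2 4 6" using s4[of 1 2 4 6 "-1"] s3[of 1 2 4 "-1" 6] s2[of 1 2 "-1" 4 6] s1[of 1 "-1" 2 4 6] by linarith
  have k_m1_1_2_4_6: "E (-1) 1 2 4 6 < 0" using u57 pq36 by linarith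
  have pq37: "E 1 2 4 6 5 = - E 1 2 4 5 6" using s4[of 1 2 4 6 5] by linarith
  have u58: "E 1 2 4 6 5 < 0" using pq37 k_1_2_4_5_6 by linarith
  have u59: "0 < E 1 2 4 6 5 * E 1 2 4 6 (-3)" by (rule fac) (simp_all add: Delta_facets_lit Delta_vertices_def)
  have u60: "E 1 2 4 6 (-3) < 0" by (rule pm2[OF u59 u58])
  have pq38: "E 1 2 4 6 (-3) = E (-3) 1 2 4 6" using s4[of 1 2 4 6 "-3"] s3[of 1 2 4 "-3" 6] s2[of 1 2 "-3" 4 6] s1[of 1 "-3" 2 4 6] by linarith
  have k_m3_1_2_4_6: "E (-3) 1 2 4 6 < 0" using u60 pq38 by linarith
  have pq39: "E 1 2 4 6 5 = - E 1 2 4 5 6" using s4[of 1 2 4 6 5] by linarith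
  have u61: "E 1 2 4 6 5 < 0" using pq39 k_1_2_4_5_6 by linarith
  have u62: "0 < E 1 2 4 6 5 * E 1 2 4 6 (-4)" by (rule fac) (simp_all add: Delta_facets_lit Delta_vertices_def)
  have u63: "E 1 2 4 6 (-4) < 0" by (rule pm2[OF u62 u61])
  have pq40: "E 1 2 4 6 (-4) = E (-4) 1 2 4 6" using s4[of 1 2 4 6 "-4"] s3[of 1 2 4 "-4" 6] s2[of 1 2 "-4" 4 6] s1[of 1 "-4" 2 4 6] by linarith
  have k_m4_1_2_4_6: "E (-4) 1 2 4 6 < 0" using u63 pq40 by linarith
  have pq41: "E 1 2 4 6 5 = - E 1 2 4 5 6" using s4[of 1 2 4 6 5] by linarith
  have u64: "E 1 2 4 6 5 < 0" using pq41 k_1_2_4_5_6 by linarith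
  have u65: "0 < E 1 2 4 6 5 * E 1 2 4 6 (-5)" by (rule fac) (simp_all add: Delta_facets_lit Delta_vertices_def)
  have u66: "E 1 2 4 6 (-5) < 0" by (rule pm2[OF u65 u64])
  have pq42: "E 1 2 4 6 (-5) = E (-5) 1 2 4 6" using s4[of 1 2 4 6 "-5"] s3[of 1 2 4 "-5" 6] s2[of 1 2 "-5" 4 6] s1[of 1 "-5" 2 4 6] by linarith
  have k_m5_1_2_4_6: "E (-5) 1 2 4 6 < 0" using u66 pq42 by linarith
  have pq43: "E 2 3 4 6 1 = E 1 2 3 4 6" using s4[of 2 3 4 6 1] s3[of 2 3 4 1 6] s2[of 2 3 1 4 6] s1[of 2 1 3 4 6] by linarith
  have u67: "E 2 3 4 6 1 < 0" using pq43 k_1_2_3_4_6 by linarith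
  have u68: "0 < E 2 3 4 6 1 * E 2 3 4 6 (-5)" by (rule fac) (simp_all add: Delta_facets_lit Delta_vertices_def)
  have u69: "E 2 3 4 6 (-5) < 0" by (rule pm2[OF u68 u67])
  have pq44: "E 2 3 4 6 (-5) = E (-5) 2 3 4 6" using s4[of 2 3 4 6 "-5"] s3[of 2 3 4 "-5" 6] s2[of 2 3 "-5" 4 6] s1[of 2 "-5" 3 4 6] by linarith
  have k_m5_2_3_4_6: "E (-5) 2 3 4 6 < 0" using u69 pq44 by linarith
  have pq45: "E 1 (-3) 4 6 2 = - E (-3) 1 2 4 6" using s1[of 1 "-3" 4 6 2] s4[of "-3" 1 4 6 2] s3[of "-3" 1 4 2 6] by linarith
  have u70: "0 < E 1 (-3) 4 6 2" using pq45 k_m3_1_2_4_6 by linarith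
  have u71: "0 < E 1 (-3) 4 6 2 * E 1 (-3) 4 6 3" by (rule fac) (simp_all add: Delta_facets_lit Delta_vertices_def)
  have u72: "0 < E 1 (-3) 4 6 3" by (rule pm1[OF u71 u70])
  have pq46: "E 1 (-3) 4 6 3 = - E (-3) 1 3 4 6" using s1[of 1 "-3" 4 6 3] s4[of "-3" 1 4 6 3] s3[of "-3" 1 4 3 6] by linarith
  have k_m3_1_3_4_6: "E (-3) 1 3 4 6 < 0" using u72 pq46 by linarith
  have pq47: "E 2 3 4 (-5) 6 = - E (-5) 2 3 4 6" using s3[of 2 3 4 "-5" 6] s2[of 2 3 "-5" 4 6] s1[of 2 "-5" 3 4 6] by linarith
  have u73: "0 < E 2 3 4 (-5) 6" using pq47 k_m5_2_3_4_6 by linarith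
  have u74: "0 < E 2 3 4 (-5) 6 * E 2 3 4 (-5) 1" by (rule fac) (simp_all add: Delta_facets_lit Delta_vertices_def)
  have u75: "0 < E 2 3 4 (-5) 1" by (rule pm1[OF u74 u73])
  have pq48: "E 2 3 4 (-5) 1 = E (-5) 1 2 3 4" using s3[of 2 3 4 "-5" 1] s4[of 2 3 "-5" 4 1] s2[of 2 3 "-5" 1 4] s3[of 2 "-5" 3 1 4] s1[of 2 "-5" 1 3 4] s2[of "-5" 2 1 3 4] by linarith
  have k_m5_1_2_3_4: "0 < E (-5) 1 2 3 4" using u75 pq48 by linarith
  have pq49: "E 2 3 4 (-5) 6 = - E (-5) 2 3 4 6" using s3[of 2 3 4 "-5" 6] s2[of 2 3 "-5" 4 6] s1[of 2 "-5" 3 4 6] by linarith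
  have u76: "0 < E 2 3 4 (-5) 6" using pq49 k_m5_2_3_4_6 by linarith
  have u77: "0 < E 2 3 4 (-5) 6 * E 2 3 4 (-5) (-1)" by (rule fac) (simp_all add: Delta_facets_lit Delta_vertices_def)
  have u78: "0 < E 2 3 4 (-5) (-1)" by (rule pm1[OF u77 u76])
  have pq50: "E 2 3 4 (-5) (-1) = E (-5) (-1) 2 3 4" using s3[of 2 3 4 "-5" "-1"] s4[of 2 3 "-5" 4 "-1"] s2[of 2 3 "-5" "-1" 4] s3[of 2 "-5" 3 "-1" 4] s1[of 2 "-5" "-1" 3 4] s2[of "-5" 2 "-1" 3 4] by linarith
  have k_m5_m1_2_3_4: "0 < E (-5) (-1) 2 3 4" using u78 pq50 by linarith
  have pq51: "E 2 3 4 (-5) 6 = - E (-5) 2 3 4 6" using s3[of 2 3 4 "-5" 6] s2[of 2 3 "-5" 4 6] s1[of 2 "-5" 3 4 6] by linarith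
  have u79: "0 < E 2 3 4 (-5) 6" using pq51 k_m5_2_3_4_6 by linarith
  have u80: "0 < E 2 3 4 (-5) 6 * E 2 3 4 (-5) (-6)" by (rule fac) (simp_all add: Delta_facets_lit Delta_vertices_def)
  have u81: "0 < E 2 3 4 (-5) (-6)" by (rule pm1[OF u80 u79])
  have pq52: "E 2 3 4 (-5) (-6) = - E (-6) (-5) 2 3 4" using s3[of 2 3 4 "-5" "-6"] s4[of 2 3 "-5" 4 "-6"] s2[of 2 3 "-5" "-6" 4] s3[of 2 "-5" 3 "-6" 4] s1[of 2 "-5" "-6" 3 4] s2[of "-5" 2 "-6" 3 4] s1[of "-5" "-6" 2 3 4] by linarith
  have k_m6_m5_2_3_4: "E (-6) (-5) 2 3 4 < 0" using u81 pq52 by linarith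
  have pq53: "E (-1) 2 4 (-5) 3 = E (-5) (-1) 2 3 4" using s3[of "-1" 2 4 "-5" 3] s4[of "-1" 2 "-5" 4 3] s2[of "-1" 2 "-5" 3 4] s1[of "-1" "-5" 2 3 4] by linarith
  have u82: "0 < E (-1) 2 4 (-5) 3" using pq53 k_m5_m1_2_3_4 by linarith
  have u83: "0 < E (-1) 2 4 (-5) 3 * E (-1) 2 4 (-5) 1" by (rule fac) (simp_all add: Delta_facets_lit Delta_vertices_def)
  have u84: "0 < E (-1) 2 4 (-5) 1" by (rule pm1[OF u83 u82])
  have pq54: "E (-1) 2 4 (-5) 1 = - E (-5) (-1) 1 2 4" using s3[of "-1" 2 4 "-5" 1] s4[of "-1" 2 "-5" 4 1] s2[of "-1" 2 "-5" 1 4] s3[of "-1" "-5" 2 1 4] s1[of "-1" "-5" 1 2 4] by linarith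
  have k_m5_m1_1_2_4: "E (-5) (-1) 1 2 4 < 0" using u84 pq54 by linarith
  have pq55: "E 3 4 5 (-6) 6 = - E (-6) 3 4 5 6" using s3[of 3 4 5 "-6" 6] s2[of 3 4 "-6" 5 6] s1[of 3 "-6" 4 5 6] by linarith
  have u85: "E 3 4 5 (-6) 6 < 0" using pq55 k_m6_3_4_5_6 by linarith
  have u86: "0 < E 3 4 5 (-6) 6 * E 3 4 5 (-6) 1" by (rule fac) (simp_all add: Delta_facets_lit Delta_vertices_def)
  have u87: "E 3 4 5 (-6) 1 < 0" by (rule pm2[OF u86 u85])
  have pq56: "E 3 4 5 (-6) 1 = E (-6) 1 3 4 5" using s3[of 3 4 5 "-6" 1] s4[of 3 4 "-6" 5 1] s2[of 3 4 "-6" 1 5] s3[of 3 "-6" 4 1 5] s1[of 3 "-6" 1 4 5] s2[of "-6" 3 1 4 5] by linarith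
  have k_m6_1_3_4_5: "E (-6) 1 3 4 5 < 0" using u87 pq56 by linarith
  have pq57: "E 3 4 5 (-6) 6 = - E (-6) 3 4 5 6" using s3[of 3 4 5 "-6" 6] s2[of 3 4 "-6" 5 6] s1[of 3 "-6" 4 5 6] by linarith
  have u88: "E 3 4 5 (-6) 6 < 0" using pq57 k_m6_3_4_5_6 by linarith
  have u89: "0 < E 3 4 5 (-6) 6 * E 3 4 5 (-6) (-1)" by (rule fac) (simp_all add: Delta_facets_lit Delta_vertices_def)
  have u90: "E 3 4 5 (-6) (-1) < 0" by (rule pm2[OF u89 u88])
  have pq58: "E 3 4 5 (-6) (-1) = E (-6) (-1) 3 4 5" using s3[of 3 4 5 "-6" "-1"] s4[of 3 4 "-6" 5 "-1"] s2[of 3 4 "-6" "-1" 5] s3[of 3 "-6" 4 "-1" 5] s1[of 3 "-6" "-1" 4 5] s2[of "-6" 3 "-1" 4 5] by linarith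
  have k_m6_m1_3_4_5: "E (-6) (-1) 3 4 5 < 0" using u90 pq58 by linarith
  have pq59: "E (-1) 3 5 (-6) 4 = E (-6) (-1) 3 4 5" using s3[of "-1" 3 5 "-6" 4] s4[of "-1" 3 "-6" 5 4] s2[of "-1" 3 "-6" 4 5] s1[of "-1" "-6" 3 4 5] by linarith
  have u91: "E (-1) 3 5 (-6) 4 < 0" using pq59 k_m6_m1_3_4_5 by linarith
  have u92: "0 < E (-1) 3 5 (-6) 4 * E (-1) 3 5 (-6) 1" by (rule fac) (simp_all add: Delta_facets_lit Delta_vertices_def)
  have u93: "E (-1) 3 5 (-6) 1 < 0" by (rule pm2[OF u92 u91])
  have pq60: "E (-1) 3 5 (-6) 1 = - E (-6) (-1) 1 3 5" using s3[of "-1" 3 5 "-6" 1] s4[of "-1" 3 "-6" 5 1] s2[of "-1" 3 "-6" 1 5] s3[of "-1" "-6" 3 1 5] s1[of "-1" "-6" 1 3 5] by linarith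
  have k_m6_m1_1_3_5: "0 < E (-6) (-1) 1 3 5" using u93 pq60 by linarith
  have pq61: "E 1 2 (-3) 4 6 = E (-3) 1 2 4 6" using s2[of 1 2 "-3" 4 6] s1[of 1 "-3" 2 4 6] by linarith
  have u94: "E 1 2 (-3) 4 6 < 0" using pq61 k_m3_1_2_4_6 by linarith
  have u95: "0 < E 1 2 (-3) 4 6 * E 1 2 (-3) 4 3" by (rule fac) (simp_all add: Delta_facets_lit Delta_vertices_def)
  have u96: "E 1 2 (-3) 4 3 < 0" by (rule pm2[OF u95 u94])
  have pq62: "E 1 2 (-3) 4 3 = - E (-3) 1 2 3 4" using s2[of 1 2 "-3" 4 3] s4[of 1 "-3" 2 4 3] s1[of 1 "-3" 2 3 4] by linarith
  have k_m3_1_2_3_4: "0 < E (-3) 1 2 3 4" using u96 pq62 by linarith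
  have pq63: "E 1 2 (-3) 4 6 = E (-3) 1 2 4 6" using s2[of 1 2 "-3" 4 6] s1[of 1 "-3" 2 4 6] by linarith
  have u97: "E 1 2 (-3) 4 6 < 0" using pq63 k_m3_1_2_4_6 by linarith
  have u98: "0 < E 1 2 (-3) 4 6 * E 1 2 (-3) 4 (-5)" by (rule fac) (simp_all add: Delta_facets_lit Delta_vertices_def)
  have u99: "E 1 2 (-3) 4 (-5) < 0" by (rule pm2[OF u98 u97])
  have pq64: "E 1 2 (-3) 4 (-5) = E (-5) (-3) 1 2 4" using s2[of 1 2 "-3" 4 "-5"] s4[of 1 "-3" 2 4 "-5"] s1[of 1 "-3" 2 "-5" 4] s3[of "-3" 1 2 "-5" 4] s2[of "-3" 1 "-5" 2 4] s1[of "-3" "-5" 1 2 4] by linarith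
  have k_m5_m3_1_2_4: "E (-5) (-3) 1 2 4 < 0" using u99 pq64 by linarith
  have pq65: "E 1 2 3 (-4) 5 = - E (-4) 1 2 3 5" using s3[of 1 2 3 "-4" 5] s2[of 1 2 "-4" 3 5] s1[of 1 "-4" 2 3 5] by linarith
  have u100: "E 1 2 3 (-4) 5 < 0" using pq65 k_m4_1_2_3_5 by linarith
  have u101: "0 < E 1 2 3 (-4) 5 * E 1 2 3 (-4) 4" by (rule fac) (simp_all add: Delta_facets_lit Delta_vertices_def)
  have u102: "E 1 2 3 (-4) 4 < 0" by (rule pm2[OF u101 u100])
  have pq66: "E 1 2 3 (-4) 4 = - E (-4) 1 2 3 4" using s3[of 1 2 3 "-4" 4] s2[of 1 2 "-4" 3 4] s1[of 1 "-4" 2 3 4] by linarith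
  have k_m4_1_2_3_4: "0 < E (-4) 1 2 3 4" using u102 pq66 by linarith
  have pq67: "E 1 2 3 (-4) 5 = - E (-4) 1 2 3 5" using s3[of 1 2 3 "-4" 5] s2[of 1 2 "-4" 3 5] s1[of 1 "-4" 2 3 5] by linarith
  have u103: "E 1 2 3 (-4) 5 < 0" using pq67 k_m4_1_2_3_5 by linarith
  have u104: "0 < E 1 2 3 (-4) 5 * E 1 2 3 (-4) (-1)" by (rule fac) (simp_all add: Delta_facets_lit Delta_vertices_def)
  have u105: "E 1 2 3 (-4) (-1) < 0" by (rule pm2[OF u104 u103])
  have pq68: "E 1 2 3 (-4) (-1) = E (-4) (-1) 1 2 3" using s3[of 1 2 3 "-4" "-1"] s4[of 1 2 "-4" 3 "-1"] s2[of 1 2 "-4" "-1" 3] s3[of 1 "-4" 2 "-1" 3] s1[of 1 "-4" "-1" 2 3] s2[of "-4" 1 "-1" 2 3] by linarith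
  have k_m4_m1_1_2_3: "E (-4) (-1) 1 2 3 < 0" using u105 pq68 by linarith
  have pq69: "E 1 2 3 (-4) 5 = - E (-4) 1 2 3 5" using s3[of 1 2 3 "-4" 5] s2[of 1 2 "-4" 3 5] s1[of 1 "-4" 2 3 5] by linarith
  have u106: "E 1 2 3 (-4) 5 < 0" using pq69 k_m4_1_2_3_5 by linarith
  have u107: "0 < E 1 2 3 (-4) 5 * E 1 2 3 (-4) (-6)" by (rule fac) (simp_all add: Delta_facets_lit Delta_vertices_def)
  have u108: "E 1 2 3 (-4) (-6) < 0" by (rule pm2[OF u107 u106])
  have pq70: "E 1 2 3 (-4) (-6) = - E (-6) (-4) 1 2 3" using s3[of 1 2 3 "-4" "-6"] s4[of 1 2 "-4" 3 "-6"] s2[of 1 2 "-4" "-6" 3] s3[of 1 "-4" 2 "-6" 3] s1[of 1 "-4" "-6" 2 3] s2[of "-4" 1 "-6" 2 3] s1[of "-4" "-6" 1 2 3] by linarith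
  have k_m6_m4_1_2_3: "0 < E (-6) (-4) 1 2 3" using u108 pq70 by linarith
  have pq71: "E 1 2 (-5) (-6) (-4) = - E (-6) (-5) (-4) 1 2" using s2[of 1 2 "-5" "-6" "-4"] s3[of 1 "-5" 2 "-6" "-4"] s4[of 1 "-5" "-6" 2 "-4"] s1[of 1 "-5" "-6" "-4" 2] s2[of "-5" 1 "-6" "-4" 2] s3[of "-5" "-6" 1 "-4" 2] s1[of "-5" "-6" "-4" 1 2] by linarith
  have u109: "0 < E 1 2 (-5) (-6) (-4)" using pq71 k_m6_m5_m4_1_2 by linarith
  have u110: "0 < E 1 2 (-5) (-6) (-4) * E 1 2 (-5) (-6) 3" by (rule fac) (simp_all add: Delta_facets_lit Delta_vertices_def)
  have u111: "0 < E 1 2 (-5) (-6) 3" by (rule pm1[OF u110 u109])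
  have pq72: "E 1 2 (-5) (-6) 3 = - E (-6) (-5) 1 2 3" using s2[of 1 2 "-5" "-6" 3] s3[of 1 "-5" 2 "-6" 3] s1[of 1 "-5" "-6" 2 3] s2[of "-5" 1 "-6" 2 3] s1[of "-5" "-6" 1 2 3] by linarith
  have k_m6_m5_1_2_3: "E (-6) (-5) 1 2 3 < 0" using u111 pq72 by linarith
  have pq73: "E 1 2 (-5) (-6) (-4) = - E (-6) (-5) (-4) 1 2" using s2[of 1 2 "-5" "-6" "-4"] s3[of 1 "-5" 2 "-6" "-4"] s4[of 1 "-5" "-6" 2 "-4"] s1[of 1 "-5" "-6" "-4" 2] s2[of "-5" 1 "-6" "-4" 2] s3[of "-5" "-6" 1 "-4" 2] s1[of "-5" "-6" "-4" 1 2] by linarith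
  have u112: "0 < E 1 2 (-5) (-6) (-4)" using pq73 k_m6_m5_m4_1_2 by linarith
  have u113: "0 < E 1 2 (-5) (-6) (-4) * E 1 2 (-5) (-6) 4" by (rule fac) (simp_all add: Delta_facets_lit Delta_vertices_def)
  have u114: "0 < E 1 2 (-5) (-6) 4" by (rule pm1[OF u113 u112])
  have pq74: "E 1 2 (-5) (-6) 4 = - E (-6) (-5) 1 2 4" using s2[of 1 2 "-5" "-6" 4] s3[of 1 "-5" 2 "-6" 4] s1[of 1 "-5" "-6" 2 4] s2[of "-5" 1 "-6" 2 4] s1[of "-5" "-6" 1 2 4] by linarith
  have k_m6_m5_1_2_4: "E (-6) (-5) 1 2 4 < 0" using u114 pq74 by linarith
  have pq75: "E 1 2 (-5) (-6) (-4) = - E (-6) (-5) (-4) 1 2" using s2[of 1 2 "-5" "-6" "-4"] s3[of 1 "-5" 2 "-6" "-4"] s4[of 1 "-5" "-6" 2 "-4"] s1[of 1 "-5" "-6" "-4" 2] s2[of "-5" 1 "-6" "-4" 2] s3[of "-5" "-6" 1 "-4" 2] s1[of "-5" "-6" "-4" 1 2] by linarith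
  have u115: "0 < E 1 2 (-5) (-6) (-4)" using pq75 k_m6_m5_m4_1_2 by linarith
  have u116: "0 < E 1 2 (-5) (-6) (-4) * E 1 2 (-5) (-6) 5" by (rule fac) (simp_all add: Delta_facets_lit Delta_vertices_def)
  have u117: "0 < E 1 2 (-5) (-6) 5" by (rule pm1[OF u116 u115])
  have pq76: "E 1 2 (-5) (-6) 5 = - E (-6) (-5) 1 2 5" using s2[of 1 2 "-5" "-6" 5] s3[of 1 "-5" 2 "-6" 5] s1[of 1 "-5" "-6" 2 5] s2[of "-5" 1 "-6" 2 5] s1[of "-5" "-6" 1 2 5] by linarith
  have k_m6_m5_1_2_5: "E (-6) (-5) 1 2 5 < 0" using u117 pq76 by linarith
  have pq77: "E 1 2 (-5) (-6) (-4) = - E (-6) (-5) (-4) 1 2" using s2[of 1 2 "-5" "-6" "-4"] s3[of 1 "-5" 2 "-6" "-4"] s4[of 1 "-5" "-6" 2 "-4"] s1[of 1 "-5" "-6" "-4" 2] s2[of "-5" 1 "-6" "-4" 2] s3[of "-5" "-6" 1 "-4" 2] s1[of "-5" "-6" "-4" 1 2] by linarith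
  have u118: "0 < E 1 2 (-5) (-6) (-4)" using pq77 k_m6_m5_m4_1_2 by linarith
  have u119: "0 < E 1 2 (-5) (-6) (-4) * E 1 2 (-5) (-6) (-1)" by (rule fac) (simp_all add: Delta_facets_lit Delta_vertices_def)
  have u120: "0 < E 1 2 (-5) (-6) (-1)" by (rule pm1[OF u119 u118])
  have pq78: "E 1 2 (-5) (-6) (-1) = - E (-6) (-5) (-1) 1 2" using s2[of 1 2 "-5" "-6" "-1"] s3[of 1 "-5" 2 "-6" "-1"] s4[of 1 "-5" "-6" 2 "-1"] s1[of 1 "-5" "-6" "-1" 2] s2[of "-5" 1 "-6" "-1" 2] s3[of "-5" "-6" 1 "-1" 2] s1[of "-5" "-6" "-1" 1 2] by linarith
  have k_m6_m5_m1_1_2: "E (-6) (-5) (-1) 1 2 < 0" using u120 pq78 by linarith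
  have pq79: "E 3 4 (-5) (-6) 2 = - E (-6) (-5) 2 3 4" using s2[of 3 4 "-5" "-6" 2] s3[of 3 "-5" 4 "-6" 2] s4[of 3 "-5" "-6" 4 2] s1[of 3 "-5" "-6" 2 4] s2[of "-5" 3 "-6" 2 4] s3[of "-5" "-6" 3 2 4] s1[of "-5" "-6" 2 3 4] by linarith
  have u121: "0 < E 3 4 (-5) (-6) 2" using pq79 k_m6_m5_2_3_4 by linarith
  have u122: "0 < E 3 4 (-5) (-6) 2 * E 3 4 (-5) (-6) 1" by (rule fac) (simp_all add: Delta_facets_lit Delta_vertices_def)
  have u123: "0 < E 3 4 (-5) (-6) 1" by (rule pm1[OF u122 u121])
  have pq80: "E 3 4 (-5) (-6) 1 = - E (-6) (-5) 1 3 4" using s2[of 3 4 "-5" "-6" 1] s3[of 3 "-5" 4 "-6" 1] s4[of 3 "-5" "-6" 4 1] s1[of 3 "-5" "-6" 1 4] s2[of "-5" 3 "-6" 1 4] s3[of "-5" "-6" 3 1 4] s1[of "-5" "-6" 1 3 4] by linarith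
  have k_m6_m5_1_3_4: "E (-6) (-5) 1 3 4 < 0" using u123 pq80 by linarith
  have pq81: "E (-1) 4 5 6 3 = - E (-1) 3 4 5 6" using s4[of "-1" 4 5 6 3] s3[of "-1" 4 5 3 6] s2[of "-1" 4 3 5 6] by linarith
  have u124: "E (-1) 4 5 6 3 < 0" using pq81 k_m1_3_4_5_6 by linarith
  have u125: "0 < E (-1) 4 5 6 3 * E (-1) 4 5 6 (-2)" by (rule fac) (simp_all add: Delta_facets_lit Delta_vertices_def)
  have u126: "E (-1) 4 5 6 (-2) < 0" by (rule pm2[OF u125 u124])
  have pq82: "E (-1) 4 5 6 (-2) = E (-2) (-1) 4 5 6" using s4[of "-1" 4 5 6 "-2"] s3[of "-1" 4 5 "-2" 6] s2[of "-1" 4 "-2" 5 6] s1[of "-1" "-2" 4 5 6] by linarith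
  have k_m2_m1_4_5_6: "E (-2) (-1) 4 5 6 < 0" using u126 pq82 by linarith
  have pq83: "E 1 2 (-3) (-5) 4 = - E (-5) (-3) 1 2 4" using s2[of 1 2 "-3" "-5" 4] s3[of 1 "-3" 2 "-5" 4] s1[of 1 "-3" "-5" 2 4] s2[of "-3" 1 "-5" 2 4] s1[of "-3" "-5" 1 2 4] by linarith
  have u127: "0 < E 1 2 (-3) (-5) 4" using pq83 k_m5_m3_1_2_4 by linarith
  have u128: "0 < E 1 2 (-3) (-5) 4 * E 1 2 (-3) (-5) 6" by (rule fac) (simp_all add: Delta_facets_lit Delta_vertices_def)
  have u129: "0 < E 1 2 (-3) (-5) 6" by (rule pm1[OF u128 u127])
  have pq84: "E 1 2 (-3) (-5) 6 = - E (-5) (-3) 1 2 6" using s2[of 1 2 "-3" "-5" 6] s3[of 1 "-3" 2 "-5" 6] s1[of 1 "-3" "-5" 2 6] s2[of "-3" 1 "-5" 2 6] s1[of "-3" "-5" 1 2 6] by linarith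
  have k_m5_m3_1_2_6: "E (-5) (-3) 1 2 6 < 0" using u129 pq84 by linarith
  have pq85: "E 1 2 (-4) (-6) 3 = - E (-6) (-4) 1 2 3" using s2[of 1 2 "-4" "-6" 3] s3[of 1 "-4" 2 "-6" 3] s1[of 1 "-4" "-6" 2 3] s2[of "-4" 1 "-6" 2 3] s1[of "-4" "-6" 1 2 3] by linarith
  have u130: "E 1 2 (-4) (-6) 3 < 0" using pq85 k_m6_m4_1_2_3 by linarith
  have u131: "0 < E 1 2 (-4) (-6) 3 * E 1 2 (-4) (-6) 4" by (rule fac) (simp_all add: Delta_facets_lit Delta_vertices_def)
  have u132: "E 1 2 (-4) (-6) 4 < 0" by (rule pm2[OF u131 u130])
  have pq86: "E 1 2 (-4) (-6) 4 = - E (-6) (-4) 1 2 4" using s2[of 1 2 "-4" "-6" 4] s3[of 1 "-4" 2 "-6" 4] s1[of 1 "-4" "-6" 2 4] s2[of "-4" 1 "-6" 2 4] s1[of "-4" "-6" 1 2 4] by linarith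
  have k_m6_m4_1_2_4: "0 < E (-6) (-4) 1 2 4" using u132 pq86 by linarith
  have pq87: "E 1 2 (-4) (-6) 3 = - E (-6) (-4) 1 2 3" using s2[of 1 2 "-4" "-6" 3] s3[of 1 "-4" 2 "-6" 3] s1[of 1 "-4" "-6" 2 3] s2[of "-4" 1 "-6" 2 3] s1[of "-4" "-6" 1 2 3] by linarith
  have u133: "E 1 2 (-4) (-6) 3 < 0" using pq87 k_m6_m4_1_2_3 by linarith
  have u134: "0 < E 1 2 (-4) (-6) 3 * E 1 2 (-4) (-6) (-1)" by (rule fac) (simp_all add: Delta_facets_lit Delta_vertices_def)
  have u135: "E 1 2 (-4) (-6) (-1) < 0" by (rule pm2[OF u134 u133])
  have pq88: "E 1 2 (-4) (-6) (-1) = - E (-6) (-4) (-1) 1 2" using s2[of 1 2 "-4" "-6" "-1"] s3[of 1 "-4" 2 "-6" "-1"] s4[of 1 "-4" "-6" 2 "-1"] s1[of 1 "-4" "-6" "-1" 2] s2[of "-4" 1 "-6" "-1" 2] s3[of "-4" "-6" 1 "-1" 2] s1[of "-4" "-6" "-1" 1 2] by linarith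
  have k_m6_m4_m1_1_2: "0 < E (-6) (-4) (-1) 1 2" using u135 pq88 by linarith
  have pq89: "E 1 (-3) (-5) 6 2 = E (-5) (-3) 1 2 6" using s1[of 1 "-3" "-5" 6 2] s2[of "-3" 1 "-5" 6 2] s4[of "-3" "-5" 1 6 2] s1[of "-3" "-5" 1 2 6] by linarith
  have u136: "E 1 (-3) (-5) 6 2 < 0" using pq89 k_m5_m3_1_2_6 by linarith
  have u137: "0 < E 1 (-3) (-5) 6 2 * E 1 (-3) (-5) 6 3" by (rule fac) (simp_all add: Delta_facets_lit Delta_vertices_def)
  have u138: "E 1 (-3) (-5) 6 3 < 0" by (rule pm2[OF u137 u136])
  have pq90: "E 1 (-3) (-5) 6 3 = E (-5) (-3) 1 3 6" using s1[of 1 "-3" "-5" 6 3] s2[of "-3" 1 "-5" 6 3] s4[of "-3" "-5" 1 6 3] s1[of "-3" "-5" 1 3 6] by linarith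
  have k_m5_m3_1_3_6: "E (-5) (-3) 1 3 6 < 0" using u138 pq90 by linarith
  have pq91: "E 1 (-3) (-5) 6 2 = E (-5) (-3) 1 2 6" using s1[of 1 "-3" "-5" 6 2] s2[of "-3" 1 "-5" 6 2] s4[of "-3" "-5" 1 6 2] s1[of "-3" "-5" 1 2 6] by linarith
  have u139: "E 1 (-3) (-5) 6 2 < 0" using pq91 k_m5_m3_1_2_6 by linarith
  have u140: "0 < E 1 (-3) (-5) 6 2 * E 1 (-3) (-5) 6 5" by (rule fac) (simp_all add: Delta_facets_lit Delta_vertices_def)
  have u141: "E 1 (-3) (-5) 6 5 < 0" by (rule pm2[OF u140 u139])
  have pq92: "E 1 (-3) (-5) 6 5 = E (-5) (-3) 1 5 6" using s1[of 1 "-3" "-5" 6 5] s2[of "-3" 1 "-5" 6 5] s4[of "-3" "-5" 1 6 5] s1[of "-3" "-5" 1 5 6] by linarith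
  have k_m5_m3_1_5_6: "E (-5) (-3) 1 5 6 < 0" using u141 pq92 by linarith
  have pq93: "E (-1) (-2) 5 6 4 = - E (-2) (-1) 4 5 6" using s1[of "-1" "-2" 5 6 4] s4[of "-2" "-1" 5 6 4] s3[of "-2" "-1" 5 4 6] by linarith
  have u142: "0 < E (-1) (-2) 5 6 4" using pq93 k_m2_m1_4_5_6 by linarith
  have u143: "0 < E (-1) (-2) 5 6 4 * E (-1) (-2) 5 6 1" by (rule fac) (simp_all add: Delta_facets_lit Delta_vertices_def)
  have u144: "0 < E (-1) (-2) 5 6 1" by (rule pm1[OF u143 u142])
  have pq94: "E (-1) (-2) 5 6 1 = - E (-2) (-1) 1 5 6" using s1[of "-1" "-2" 5 6 1] s4[of "-2" "-1" 5 6 1] s3[of "-2" "-1" 5 1 6] by linarith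
  have k_m2_m1_1_5_6: "E (-2) (-1) 1 5 6 < 0" using u144 pq94 by linarith
  have pq95: "E (-1) (-2) 5 6 4 = - E (-2) (-1) 4 5 6" using s1[of "-1" "-2" 5 6 4] s4[of "-2" "-1" 5 6 4] s3[of "-2" "-1" 5 4 6] by linarith
  have u145: "0 < E (-1) (-2) 5 6 4" using pq95 k_m2_m1_4_5_6 by linarith
  have u146: "0 < E (-1) (-2) 5 6 4 * E (-1) (-2) 5 6 (-3)" by (rule fac) (simp_all add: Delta_facets_lit Delta_vertices_def)
  have u147: "0 < E (-1) (-2) 5 6 (-3)" by (rule pm1[OF u146 u145])
  have pq96: "E (-1) (-2) 5 6 (-3) = - E (-3) (-2) (-1) 5 6" using s1[of "-1" "-2" 5 6 "-3"] s4[of "-2" "-1" 5 6 "-3"] s3[of "-2" "-1" 5 "-3" 6] s2[of "-2" "-1" "-3" 5 6] s1[of "-2" "-3" "-1" 5 6] by linarith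
  have k_m3_m2_m1_5_6: "E (-3) (-2) (-1) 5 6 < 0" using u147 pq96 by linarith
  have pq97: "E (-2) (-3) 5 6 (-1) = - E (-3) (-2) (-1) 5 6" using s1[of "-2" "-3" 5 6 "-1"] s4[of "-3" "-2" 5 6 "-1"] s3[of "-3" "-2" 5 "-1" 6] by linarith
  have u148: "0 < E (-2) (-3) 5 6 (-1)" using pq97 k_m3_m2_m1_5_6 by linarith
  have u149: "0 < E (-2) (-3) 5 6 (-1) * E (-2) (-3) 5 6 1" by (rule fac) (simp_all add: Delta_facets_lit Delta_vertices_def)
  have u150: "0 < E (-2) (-3) 5 6 1" by (rule pm1[OF u149 u148])
  have pq98: "E (-2) (-3) 5 6 1 = - E (-3) (-2) 1 5 6" using s1[of "-2" "-3" 5 6 1] s4[of "-3" "-2" 5 6 1] s3[of "-3" "-2" 5 1 6] by linarith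
  have k_m3_m2_1_5_6: "E (-3) (-2) 1 5 6 < 0" using u150 pq98 by linarith
  have pq99: "E 1 2 3 5 (-3) = E (-3) 1 2 3 5" using s4[of 1 2 3 5 "-3"] s3[of 1 2 3 "-3" 5] s2[of 1 2 "-3" 3 5] s1[of 1 "-3" 2 3 5] by linarith
  have u151: "0 < E 1 2 3 5 (-3)" using pq99 k_m3_1_2_3_5 by linarith
  have u152: "E 1 2 3 4 6 * E 1 2 3 5 (-3) < 0" using mult_neg_pos[OF k_1_2_3_4_6 u151] .
  have pq100: "E 1 2 3 4 (-3) = E (-3) 1 2 3 4" using s4[of 1 2 3 4 "-3"] s3[of 1 2 3 "-3" 4] s2[of 1 2 "-3" 3 4] s1[of 1 "-3" 2 3 4] by linarith
  have u153: "0 < E 1 2 3 4 (-3)" using pq100 k_m3_1_2_3_4 by linarith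
  have u154: "0 < E 1 2 3 4 (-3) * E 1 2 3 5 6" using mult_pos_pos[OF u153 k_1_2_3_5_6] .
  have u155: "E 1 2 3 4 5 * E 1 2 3 6 (-3) < 0" using gp[of 1 2 3 4 5 6 "-3"] u152 u154 by linarith
  have u156: "0 < E 1 2 3 6 (-3)" by (rule pm4[OF u155 k_1_2_3_4_5])
  have pq101: "E 1 2 3 6 (-3) = E (-3) 1 2 3 6" using s4[of 1 2 3 6 "-3"] s3[of 1 2 3 "-3" 6] s2[of 1 2 "-3" 3 6] s1[of 1 "-3" 2 3 6] by linarith
  have k_m3_1_2_3_6: "0 < E (-3) 1 2 3 6" using u156 pq101 by linarith
  have pq102: "E 1 2 3 5 (-5) = E (-5) 1 2 3 5" using s4[of 1 2 3 5 "-5"] s3[of 1 2 3 "-5" 5] s2[of 1 2 "-5" 3 5] s1[of 1 "-5" 2 3 5] by linarith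
  have u157: "0 < E 1 2 3 5 (-5)" using pq102 k_m5_1_2_3_5 by linarith
  have u158: "E 1 2 3 4 6 * E 1 2 3 5 (-5) < 0" using mult_neg_pos[OF k_1_2_3_4_6 u157] .
  have pq103: "E 1 2 3 4 (-5) = E (-5) 1 2 3 4" using s4[of 1 2 3 4 "-5"] s3[of 1 2 3 "-5" 4] s2[of 1 2 "-5" 3 4] s1[of 1 "-5" 2 3 4] by linarith
  have u159: "0 < E 1 2 3 4 (-5)" using pq103 k_m5_1_2_3_4 by linarith
  have u160: "0 < E 1 2 3 4 (-5) * E 1 2 3 5 6" using mult_pos_pos[OF u159 k_1_2_3_5_6] .
  have u161: "E 1 2 3 4 5 * E 1 2 3 6 (-5) < 0" using gp[of 1 2 3 4 5 6 "-5"] u158 u160 by linarith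
  have u162: "0 < E 1 2 3 6 (-5)" by (rule pm4[OF u161 k_1_2_3_4_5])
  have pq104: "E 1 2 3 6 (-5) = E (-5) 1 2 3 6" using s4[of 1 2 3 6 "-5"] s3[of 1 2 3 "-5" 6] s2[of 1 2 "-5" 3 6] s1[of 1 "-5" 2 3 6] by linarith
  have k_m5_1_2_3_6: "0 < E (-5) 1 2 3 6" using u162 pq104 by linarith
  have pq105: "E 1 2 3 (-5) (-6) = - E (-6) (-5) 1 2 3" using s3[of 1 2 3 "-5" "-6"] s4[of 1 2 "-5" 3 "-6"] s2[of 1 2 "-5" "-6" 3] s3[of 1 "-5" 2 "-6" 3] s1[of 1 "-5" "-6" 2 3] s2[of "-5" 1 "-6" 2 3] s1[of "-5" "-6" 1 2 3] by linarith
  have u163: "0 < E 1 2 3 (-5) (-6)" using pq105 k_m6_m5_1_2_3 by linarith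
  have u164: "E 1 2 3 4 5 * E 1 2 3 (-5) (-6) < 0" using mult_neg_pos[OF k_1_2_3_4_5 u163] .
  have pq106: "E 1 2 3 4 (-5) = E (-5) 1 2 3 4" using s4[of 1 2 3 4 "-5"] s3[of 1 2 3 "-5" 4] s2[of 1 2 "-5" 3 4] s1[of 1 "-5" 2 3 4] by linarith
  have u165: "0 < E 1 2 3 4 (-5)" using pq106 k_m5_1_2_3_4 by linarith
  have pq107: "E 1 2 3 5 (-6) = E (-6) 1 2 3 5" using s4[of 1 2 3 5 "-6"] s3[of 1 2 3 "-6" 5] s2[of 1 2 "-6" 3 5] s1[of 1 "-6" 2 3 5] by linarith
  have u166: "0 < E 1 2 3 5 (-6)" using pq107 k_m6_1_2_3_5 by linarith
  have u167: "0 < E 1 2 3 4 (-5) * E 1 2 3 5 (-6)" using mult_pos_pos[OF u165 u166] .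
  have u168: "0 < E 1 2 3 4 (-6) * E 1 2 3 5 (-5)" using gp[of 1 2 3 4 5 "-5" "-6"] u164 u167 by linarith
  have pq108: "E 1 2 3 5 (-5) = E (-5) 1 2 3 5" using s4[of 1 2 3 5 "-5"] s3[of 1 2 3 "-5" 5] s2[of 1 2 "-5" 3 5] s1[of 1 "-5" 2 3 5] by linarith
  have u169: "0 < E 1 2 3 5 (-5)" using pq108 k_m5_1_2_3_5 by linarith
  have u170: "0 < E 1 2 3 4 (-6)" by (rule qm1[OF u168 u169])
  have pq109: "E 1 2 3 4 (-6) = E (-6) 1 2 3 4" using s4[of 1 2 3 4 "-6"] s3[of 1 2 3 "-6" 4] s2[of 1 2 "-6" 3 4] s1[of 1 "-6" 2 3 4] by linarith
  have k_m6_1_2_3_4: "0 < E (-6) 1 2 3 4" using u170 pq109 by linarith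
  have pq110: "E 1 2 4 3 5 = - E 1 2 3 4 5" using s3[of 1 2 4 3 5] by linarith
  have u171: "0 < E 1 2 4 3 5" using pq110 k_1_2_3_4_5 by linarith
  have pq111: "E 1 2 4 6 (-4) = E (-4) 1 2 4 6" using s4[of 1 2 4 6 "-4"] s3[of 1 2 4 "-4" 6] s2[of 1 2 "-4" 4 6] s1[of 1 "-4" 2 4 6] by linarith
  have u172: "E 1 2 4 6 (-4) < 0" using pq111 k_m4_1_2_4_6 by linarith
  have u173: "E 1 2 4 3 5 * E 1 2 4 6 (-4) < 0" using mult_pos_neg[OF u171 u172] .
  have pq112: "E 1 2 4 3 (-4) = - E (-4) 1 2 3 4" using s3[of 1 2 4 3 "-4"] s4[of 1 2 3 4 "-4"] s3[of 1 2 3 "-4" 4] s2[of 1 2 "-4" 3 4] s1[of 1 "-4" 2 3 4] by linarith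
  have u174: "E 1 2 4 3 (-4) < 0" using pq112 k_m4_1_2_3_4 by linarith
  have u175: "E 1 2 4 3 (-4) * E 1 2 4 5 6 < 0" using mult_neg_pos[OF u174 k_1_2_4_5_6] .
  have u176: "E 1 2 4 3 6 * E 1 2 4 5 (-4) < 0" using gp[of 1 2 4 3 5 6 "-4"] u173 u175 by linarith
  have pq113: "E 1 2 4 3 6 = - E 1 2 3 4 6" using s3[of 1 2 4 3 6] by linarith
  have u177: "0 < E 1 2 4 3 6" using pq113 k_1_2_3_4_6 by linarith
  have u178: "E 1 2 4 5 (-4) < 0" by (rule pm3[OF u176 u177])
  have pq114: "E 1 2 4 5 (-4) = E (-4) 1 2 4 5" using s4[of 1 2 4 5 "-4"] s3[of 1 2 4 "-4" 5] s2[of 1 2 "-4" 4 5] s1[of 1 "-4" 2 4 5] by linarith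
  have k_m4_1_2_4_5: "E (-4) 1 2 4 5 < 0" using u178 pq114 by linarith
  have pq115: "E 1 2 4 3 5 = - E 1 2 3 4 5" using s3[of 1 2 4 3 5] by linarith
  have u179: "0 < E 1 2 4 3 5" using pq115 k_1_2_3_4_5 by linarith
  have pq116: "E 1 2 4 6 (-5) = E (-5) 1 2 4 6" using s4[of 1 2 4 6 "-5"] s3[of 1 2 4 "-5" 6] s2[of 1 2 "-5" 4 6] s1[of 1 "-5" 2 4 6] by linarith
  have u180: "E 1 2 4 6 (-5) < 0" using pq116 k_m5_1_2_4_6 by linarith
  have u181: "E 1 2 4 3 5 * E 1 2 4 6 (-5) < 0" using mult_pos_neg[OF u179 u180] .
  have pq117: "E 1 2 4 3 (-5) = - E (-5) 1 2 3 4" using s3[of 1 2 4 3 "-5"] s4[of 1 2 3 4 "-5"] s3[of 1 2 3 "-5" 4] s2[of 1 2 "-5" 3 4] s1[of 1 "-5" 2 3 4] by linarith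
  have u182: "E 1 2 4 3 (-5) < 0" using pq117 k_m5_1_2_3_4 by linarith
  have u183: "E 1 2 4 3 (-5) * E 1 2 4 5 6 < 0" using mult_neg_pos[OF u182 k_1_2_4_5_6] .
  have u184: "E 1 2 4 3 6 * E 1 2 4 5 (-5) < 0" using gp[of 1 2 4 3 5 6 "-5"] u181 u183 by linarith
  have pq118: "E 1 2 4 3 6 = - E 1 2 3 4 6" using s3[of 1 2 4 3 6] by linarith
  have u185: "0 < E 1 2 4 3 6" using pq118 k_1_2_3_4_6 by linarith
  have u186: "E 1 2 4 5 (-5) < 0" by (rule pm3[OF u184 u185])
  have pq119: "E 1 2 4 5 (-5) = E (-5) 1 2 4 5" using s4[of 1 2 4 5 "-5"] s3[of 1 2 4 "-5" 5] s2[of 1 2 "-5" 4 5] s1[of 1 "-5" 2 4 5] by linarith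
  have k_m5_1_2_4_5: "E (-5) 1 2 4 5 < 0" using u186 pq119 by linarith
  have pq120: "E 1 2 4 3 6 = - E 1 2 3 4 6" using s3[of 1 2 4 3 6] by linarith
  have u187: "0 < E 1 2 4 3 6" using pq120 k_1_2_3_4_6 by linarith
  have pq121: "E 1 2 4 (-1) (-5) = - E (-5) (-1) 1 2 4" using s3[of 1 2 4 "-1" "-5"] s4[of 1 2 "-1" 4 "-5"] s2[of 1 2 "-1" "-5" 4] s3[of 1 "-1" 2 "-5" 4] s1[of 1 "-1" "-5" 2 4] s2[of "-1" 1 "-5" 2 4] s1[of "-1" "-5" 1 2 4] by linarith
  have u188: "0 < E 1 2 4 (-1) (-5)" using pq121 k_m5_m1_1_2_4 by linarith
  have u189: "0 < E 1 2 4 3 6 * E 1 2 4 (-1) (-5)" using mult_pos_pos[OF u187 u188] .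
  have pq122: "E 1 2 4 3 (-5) = - E (-5) 1 2 3 4" using s3[of 1 2 4 3 "-5"] s4[of 1 2 3 4 "-5"] s3[of 1 2 3 "-5" 4] s2[of 1 2 "-5" 3 4] s1[of 1 "-5" 2 3 4] by linarith
  have u190: "E 1 2 4 3 (-5) < 0" using pq122 k_m5_1_2_3_4 by linarith
  have pq123: "E 1 2 4 6 (-1) = E (-1) 1 2 4 6" using s4[of 1 2 4 6 "-1"] s3[of 1 2 4 "-1" 6] s2[of 1 2 "-1" 4 6] s1[of 1 "-1" 2 4 6] by linarith
  have u191: "E 1 2 4 6 (-1) < 0" using pq123 k_m1_1_2_4_6 by linarith
  have u192: "0 < E 1 2 4 3 (-5) * E 1 2 4 6 (-1)" using mult_neg_neg[OF u190 u191] .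
  have u193: "0 < E 1 2 4 3 (-1) * E 1 2 4 6 (-5)" using gp[of 1 2 4 3 6 "-1" "-5"] u189 u192 by linarith
  have pq124: "E 1 2 4 6 (-5) = E (-5) 1 2 4 6" using s4[of 1 2 4 6 "-5"] s3[of 1 2 4 "-5" 6] s2[of 1 2 "-5" 4 6] s1[of 1 "-5" 2 4 6] by linarith
  have u194: "E 1 2 4 6 (-5) < 0" using pq124 k_m5_1_2_4_6 by linarith
  have u195: "E 1 2 4 3 (-1) < 0" by (rule qm2[OF u193 u194])
  have pq125: "E 1 2 4 3 (-1) = - E (-1) 1 2 3 4" using s3[of 1 2 4 3 "-1"] s4[of 1 2 3 4 "-1"] s3[of 1 2 3 "-1" 4] s2[of 1 2 "-1" 3 4] s1[of 1 "-1" 2 3 4] by linarith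
  have k_m1_1_2_3_4: "0 < E (-1) 1 2 3 4" using u195 pq125 by linarith
  have pq126: "E 1 2 4 3 (-1) = - E (-1) 1 2 3 4" using s3[of 1 2 4 3 "-1"] s4[of 1 2 3 4 "-1"] s3[of 1 2 3 "-1" 4] s2[of 1 2 "-1" 3 4] s1[of 1 "-1" 2 3 4] by linarith
  have u196: "E 1 2 4 3 (-1) < 0" using pq126 k_m1_1_2_3_4 by linarith
  have pq127: "E 1 2 4 (-5) (-6) = - E (-6) (-5) 1 2 4" using s3[of 1 2 4 "-5" "-6"] s4[of 1 2 "-5" 4 "-6"] s2[of 1 2 "-5" "-6" 4] s3[of 1 "-5" 2 "-6" 4] s1[of 1 "-5" "-6" 2 4] s2[of "-5" 1 "-6" 2 4] s1[of "-5" "-6" 1 2 4] by linarith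
  have u197: "0 < E 1 2 4 (-5) (-6)" using pq127 k_m6_m5_1_2_4 by linarith
  have u198: "E 1 2 4 3 (-1) * E 1 2 4 (-5) (-6) < 0" using mult_neg_pos[OF u196 u197] .
  have pq128: "E 1 2 4 3 (-6) = - E (-6) 1 2 3 4" using s3[of 1 2 4 3 "-6"] s4[of 1 2 3 4 "-6"] s3[of 1 2 3 "-6" 4] s2[of 1 2 "-6" 3 4] s1[of 1 "-6" 2 3 4] by linarith
  have u199: "E 1 2 4 3 (-6) < 0" using pq128 k_m6_1_2_3_4 by linarith
  have pq129: "E 1 2 4 (-1) (-5) = - E (-5) (-1) 1 2 4" using s3[of 1 2 4 "-1" "-5"] s4[of 1 2 "-1" 4 "-5"] s2[of 1 2 "-1" "-5" 4] s3[of 1 "-1" 2 "-5" 4] s1[of 1 "-1" "-5" 2 4] s2[of "-1" 1 "-5" 2 4] s1[of "-1" "-5" 1 2 4] by linarith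
  have u200: "0 < E 1 2 4 (-1) (-5)" using pq129 k_m5_m1_1_2_4 by linarith
  have u201: "E 1 2 4 3 (-6) * E 1 2 4 (-1) (-5) < 0" using mult_neg_pos[OF u199 u200] .
  have u202: "E 1 2 4 3 (-5) * E 1 2 4 (-1) (-6) < 0" using gp[of 1 2 4 3 "-1" "-5" "-6"] u198 u201 by linarith
  have pq130: "E 1 2 4 3 (-5) = - E (-5) 1 2 3 4" using s3[of 1 2 4 3 "-5"] s4[of 1 2 3 4 "-5"] s3[of 1 2 3 "-5" 4] s2[of 1 2 "-5" 3 4] s1[of 1 "-5" 2 3 4] by linarith
  have u203: "E 1 2 4 3 (-5) < 0" using pq130 k_m5_1_2_3_4 by linarith
  have u204: "0 < E 1 2 4 (-1) (-6)" by (rule pm4[OF u202 u203])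
  have pq131: "E 1 2 4 (-1) (-6) = - E (-6) (-1) 1 2 4" using s3[of 1 2 4 "-1" "-6"] s4[of 1 2 "-1" 4 "-6"] s2[of 1 2 "-1" "-6" 4] s3[of 1 "-1" 2 "-6" 4] s1[of 1 "-1" "-6" 2 4] s2[of "-1" 1 "-6" 2 4] s1[of "-1" "-6" 1 2 4] by linarith
  have k_m6_m1_1_2_4: "E (-6) (-1) 1 2 4 < 0" using u204 pq131 by linarith
  have pq132: "E 1 2 4 3 (-4) = - E (-4) 1 2 3 4" using s3[of 1 2 4 3 "-4"] s4[of 1 2 3 4 "-4"] s3[of 1 2 3 "-4" 4] s2[of 1 2 "-4" 3 4] s1[of 1 "-4" 2 3 4] by linarith
  have u205: "E 1 2 4 3 (-4) < 0" using pq132 k_m4_1_2_3_4 by linarith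
  have pq133: "E 1 2 4 (-5) (-6) = - E (-6) (-5) 1 2 4" using s3[of 1 2 4 "-5" "-6"] s4[of 1 2 "-5" 4 "-6"] s2[of 1 2 "-5" "-6" 4] s3[of 1 "-5" 2 "-6" 4] s1[of 1 "-5" "-6" 2 4] s2[of "-5" 1 "-6" 2 4] s1[of "-5" "-6" 1 2 4] by linarith
  have u206: "0 < E 1 2 4 (-5) (-6)" using pq133 k_m6_m5_1_2_4 by linarith
  have u207: "E 1 2 4 3 (-4) * E 1 2 4 (-5) (-6) < 0" using mult_neg_pos[OF u205 u206] .
  have pq134: "E 1 2 4 3 (-5) = - E (-5) 1 2 3 4" using s3[of 1 2 4 3 "-5"] s4[of 1 2 3 4 "-5"] s3[of 1 2 3 "-5" 4] s2[of 1 2 "-5" 3 4] s1[of 1 "-5" 2 3 4] by linarith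
  have u208: "E 1 2 4 3 (-5) < 0" using pq134 k_m5_1_2_3_4 by linarith
  have pq135: "E 1 2 4 (-4) (-6) = - E (-6) (-4) 1 2 4" using s3[of 1 2 4 "-4" "-6"] s4[of 1 2 "-4" 4 "-6"] s2[of 1 2 "-4" "-6" 4] s3[of 1 "-4" 2 "-6" 4] s1[of 1 "-4" "-6" 2 4] s2[of "-4" 1 "-6" 2 4] s1[of "-4" "-6" 1 2 4] by linarith
  have u209: "E 1 2 4 (-4) (-6) < 0" using pq135 k_m6_m4_1_2_4 by linarith
  have u210: "0 < E 1 2 4 3 (-5) * E 1 2 4 (-4) (-6)" using mult_neg_neg[OF u208 u209] .
  have u211: "0 < E 1 2 4 3 (-6) * E 1 2 4 (-4) (-5)" using gp[of 1 2 4 3 "-4" "-5" "-6"] u207 u210 by linarith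
  have pq136: "E 1 2 4 3 (-6) = - E (-6) 1 2 3 4" using s3[of 1 2 4 3 "-6"] s4[of 1 2 3 4 "-6"] s3[of 1 2 3 "-6" 4] s2[of 1 2 "-6" 3 4] s1[of 1 "-6" 2 3 4] by linarith
  have u212: "E 1 2 4 3 (-6) < 0" using pq136 k_m6_1_2_3_4 by linarith
  have u213: "E 1 2 4 (-4) (-5) < 0" by (rule pm2[OF u211 u212])
  have pq137: "E 1 2 4 (-4) (-5) = - E (-5) (-4) 1 2 4" using s3[of 1 2 4 "-4" "-5"] s4[of 1 2 "-4" 4 "-5"] s2[of 1 2 "-4" "-5" 4] s3[of 1 "-4" 2 "-5" 4] s1[of 1 "-4" "-5" 2 4] s2[of "-4" 1 "-5" 2 4] s1[of "-4" "-5" 1 2 4] by linarith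
  have k_m5_m4_1_2_4: "0 < E (-5) (-4) 1 2 4" using u213 pq137 by linarith
  have pq138: "E 1 2 4 (-1) (-5) = - E (-5) (-1) 1 2 4" using s3[of 1 2 4 "-1" "-5"] s4[of 1 2 "-1" 4 "-5"] s2[of 1 2 "-1" "-5" 4] s3[of 1 "-1" 2 "-5" 4] s1[of 1 "-1" "-5" 2 4] s2[of "-1" 1 "-5" 2 4] s1[of "-1" "-5" 1 2 4] by linarith
  have u214: "0 < E 1 2 4 (-1) (-5)" using pq138 k_m5_m1_1_2_4 by linarith
  have u215: "0 < E 1 2 4 5 6 * E 1 2 4 (-1) (-5)" using mult_pos_pos[OF k_1_2_4_5_6 u214] .
  have pq139: "E 1 2 4 5 (-5) = E (-5) 1 2 4 5" using s4[of 1 2 4 5 "-5"] s3[of 1 2 4 "-5" 5] s2[of 1 2 "-5" 4 5] s1[of 1 "-5" 2 4 5] by linarith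
  have u216: "E 1 2 4 5 (-5) < 0" using pq139 k_m5_1_2_4_5 by linarith
  have pq140: "E 1 2 4 6 (-1) = E (-1) 1 2 4 6" using s4[of 1 2 4 6 "-1"] s3[of 1 2 4 "-1" 6] s2[of 1 2 "-1" 4 6] s1[of 1 "-1" 2 4 6] by linarith
  have u217: "E 1 2 4 6 (-1) < 0" using pq140 k_m1_1_2_4_6 by linarith
  have u218: "0 < E 1 2 4 5 (-5) * E 1 2 4 6 (-1)" using mult_neg_neg[OF u216 u217] .
  have u219: "0 < E 1 2 4 5 (-1) * E 1 2 4 6 (-5)" using gp[of 1 2 4 5 6 "-1" "-5"] u215 u218 by linarith
  have pq141: "E 1 2 4 6 (-5) = E (-5) 1 2 4 6" using s4[of 1 2 4 6 "-5"] s3[of 1 2 4 "-5" 6] s2[of 1 2 "-5" 4 6] s1[of 1 "-5" 2 4 6] by linarith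
  have u220: "E 1 2 4 6 (-5) < 0" using pq141 k_m5_1_2_4_6 by linarith
  have u221: "E 1 2 4 5 (-1) < 0" by (rule qm2[OF u219 u220])
  have pq142: "E 1 2 4 5 (-1) = E (-1) 1 2 4 5" using s4[of 1 2 4 5 "-1"] s3[of 1 2 4 "-1" 5] s2[of 1 2 "-1" 4 5] s1[of 1 "-1" 2 4 5] by linarith
  have k_m1_1_2_4_5: "E (-1) 1 2 4 5 < 0" using u221 pq142 by linarith
  have pq143: "E 1 2 4 5 (-1) = E (-1) 1 2 4 5" using s4[of 1 2 4 5 "-1"] s3[of 1 2 4 "-1" 5] s2[of 1 2 "-1" 4 5] s1[of 1 "-1" 2 4 5] by linarith
  have u222: "E 1 2 4 5 (-1) < 0" using pq143 k_m1_1_2_4_5 by linarith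
  have pq144: "E 1 2 4 (-4) (-5) = - E (-5) (-4) 1 2 4" using s3[of 1 2 4 "-4" "-5"] s4[of 1 2 "-4" 4 "-5"] s2[of 1 2 "-4" "-5" 4] s3[of 1 "-4" 2 "-5" 4] s1[of 1 "-4" "-5" 2 4] s2[of "-4" 1 "-5" 2 4] s1[of "-4" "-5" 1 2 4] by linarith
  have u223: "E 1 2 4 (-4) (-5) < 0" using pq144 k_m5_m4_1_2_4 by linarith
  have u224: "0 < E 1 2 4 5 (-1) * E 1 2 4 (-4) (-5)" using mult_neg_neg[OF u222 u223] .
  have pq145: "E 1 2 4 5 (-4) = E (-4) 1 2 4 5" using s4[of 1 2 4 5 "-4"] s3[of 1 2 4 "-4" 5] s2[of 1 2 "-4" 4 5] s1[of 1 "-4" 2 4 5] by linarith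
  have u225: "E 1 2 4 5 (-4) < 0" using pq145 k_m4_1_2_4_5 by linarith
  have pq146: "E 1 2 4 (-1) (-5) = - E (-5) (-1) 1 2 4" using s3[of 1 2 4 "-1" "-5"] s4[of 1 2 "-1" 4 "-5"] s2[of 1 2 "-1" "-5" 4] s3[of 1 "-1" 2 "-5" 4] s1[of 1 "-1" "-5" 2 4] s2[of "-1" 1 "-5" 2 4] s1[of "-1" "-5" 1 2 4] by linarith
  have u226: "0 < E 1 2 4 (-1) (-5)" using pq146 k_m5_m1_1_2_4 by linarith
  have u227: "E 1 2 4 5 (-4) * E 1 2 4 (-1) (-5) < 0" using mult_neg_pos[OF u225 u226] .
  have u228: "E 1 2 4 5 (-5) * E 1 2 4 (-1) (-4) < 0" using gp[of 1 2 4 5 "-1" "-4" "-5"] u224 u227 by linarith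
  have pq147: "E 1 2 4 5 (-5) = E (-5) 1 2 4 5" using s4[of 1 2 4 5 "-5"] s3[of 1 2 4 "-5" 5] s2[of 1 2 "-5" 4 5] s1[of 1 "-5" 2 4 5] by linarith
  have u229: "E 1 2 4 5 (-5) < 0" using pq147 k_m5_1_2_4_5 by linarith
  have u230: "0 < E 1 2 4 (-1) (-4)" by (rule pm4[OF u228 u229])
  have pq148: "E 1 2 4 (-1) (-4) = - E (-4) (-1) 1 2 4" using s3[of 1 2 4 "-1" "-4"] s4[of 1 2 "-1" 4 "-4"] s2[of 1 2 "-1" "-4" 4] s3[of 1 "-1" 2 "-4" 4] s1[of 1 "-1" "-4" 2 4] s2[of "-1" 1 "-4" 2 4] s1[of "-1" "-4" 1 2 4] by linarith
  have k_m4_m1_1_2_4: "E (-4) (-1) 1 2 4 < 0" using u230 pq148 by linarith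
  have pq149: "E 1 2 (-1) 3 5 = E (-1) 1 2 3 5" using s2[of 1 2 "-1" 3 5] s1[of 1 "-1" 2 3 5] by linarith
  have u231: "0 < E 1 2 (-1) 3 5" using pq149 k_m1_1_2_3_5 by linarith
  have pq150: "E 1 2 (-1) 4 (-4) = E (-4) (-1) 1 2 4" using s2[of 1 2 "-1" 4 "-4"] s4[of 1 "-1" 2 4 "-4"] s1[of 1 "-1" 2 "-4" 4] s3[of "-1" 1 2 "-4" 4] s2[of "-1" 1 "-4" 2 4] s1[of "-1" "-4" 1 2 4] by linarith
  have u232: "E 1 2 (-1) 4 (-4) < 0" using pq150 k_m4_m1_1_2_4 by linarith
  have u233: "E 1 2 (-1) 3 5 * E 1 2 (-1) 4 (-4) < 0" using mult_pos_neg[OF u231 u232] .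
  have pq151: "E 1 2 (-1) 3 (-4) = E (-4) (-1) 1 2 3" using s2[of 1 2 "-1" 3 "-4"] s4[of 1 "-1" 2 3 "-4"] s1[of 1 "-1" 2 "-4" 3] s3[of "-1" 1 2 "-4" 3] s2[of "-1" 1 "-4" 2 3] s1[of "-1" "-4" 1 2 3] by linarith
  have u234: "E 1 2 (-1) 3 (-4) < 0" using pq151 k_m4_m1_1_2_3 by linarith
  have pq152: "E 1 2 (-1) 4 5 = E (-1) 1 2 4 5" using s2[of 1 2 "-1" 4 5] s1[of 1 "-1" 2 4 5] by linarith
  have u235: "E 1 2 (-1) 4 5 < 0" using pq152 k_m1_1_2_4_5 by linarith
  have u236: "0 < E 1 2 (-1) 3 (-4) * E 1 2 (-1) 4 5" using mult_neg_neg[OF u234 u235] .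
  have u237: "E 1 2 (-1) 3 4 * E 1 2 (-1) 5 (-4) < 0" using gp[of 1 2 "-1" 3 4 5 "-4"] u233 u236 by linarith
  have pq153: "E 1 2 (-1) 3 4 = E (-1) 1 2 3 4" using s2[of 1 2 "-1" 3 4] s1[of 1 "-1" 2 3 4] by linarith
  have u238: "0 < E 1 2 (-1) 3 4" using pq153 k_m1_1_2_3_4 by linarith
  have u239: "E 1 2 (-1) 5 (-4) < 0" by (rule pm3[OF u237 u238])
  have pq154: "E 1 2 (-1) 5 (-4) = E (-4) (-1) 1 2 5" using s2[of 1 2 "-1" 5 "-4"] s4[of 1 "-1" 2 5 "-4"] s1[of 1 "-1" 2 "-4" 5] s3[of "-1" 1 2 "-4" 5] s2[of "-1" 1 "-4" 2 5] s1[of "-1" "-4" 1 2 5] by linarith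
  have k_m4_m1_1_2_5: "E (-4) (-1) 1 2 5 < 0" using u239 pq154 by linarith
  have pq155: "E 1 2 (-1) 3 4 = E (-1) 1 2 3 4" using s2[of 1 2 "-1" 3 4] s1[of 1 "-1" 2 3 4] by linarith
  have u240: "0 < E 1 2 (-1) 3 4" using pq155 k_m1_1_2_3_4 by linarith
  have pq156: "E 1 2 (-1) (-4) (-6) = - E (-6) (-4) (-1) 1 2" using s2[of 1 2 "-1" "-4" "-6"] s3[of 1 "-1" 2 "-4" "-6"] s4[of 1 "-1" "-4" 2 "-6"] s1[of 1 "-1" "-4" "-6" 2] s2[of "-1" 1 "-4" "-6" 2] s3[of "-1" "-4" 1 "-6" 2] s1[of "-1" "-4" "-6" 1 2] s2[of "-4" "-1" "-6" 1 2] s1[of "-4" "-6" "-1" 1 2] by linarith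
  have u241: "E 1 2 (-1) (-4) (-6) < 0" using pq156 k_m6_m4_m1_1_2 by linarith
  have u242: "E 1 2 (-1) 3 4 * E 1 2 (-1) (-4) (-6) < 0" using mult_pos_neg[OF u240 u241] .
  have pq157: "E 1 2 (-1) 3 (-4) = E (-4) (-1) 1 2 3" using s2[of 1 2 "-1" 3 "-4"] s4[of 1 "-1" 2 3 "-4"] s1[of 1 "-1" 2 "-4" 3] s3[of "-1" 1 2 "-4" 3] s2[of "-1" 1 "-4" 2 3] s1[of "-1" "-4" 1 2 3] by linarith
  have u243: "E 1 2 (-1) 3 (-4) < 0" using pq157 k_m4_m1_1_2_3 by linarith
  have pq158: "E 1 2 (-1) 4 (-6) = E (-6) (-1) 1 2 4" using s2[of 1 2 "-1" 4 "-6"] s4[of 1 "-1" 2 4 "-6"] s1[of 1 "-1" 2 "-6" 4] s3[of "-1" 1 2 "-6" 4] s2[of "-1" 1 "-6" 2 4] s1[of "-1" "-6" 1 2 4] by linarith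
  have u244: "E 1 2 (-1) 4 (-6) < 0" using pq158 k_m6_m1_1_2_4 by linarith
  have u245: "0 < E 1 2 (-1) 3 (-4) * E 1 2 (-1) 4 (-6)" using mult_neg_neg[OF u243 u244] .
  have u246: "0 < E 1 2 (-1) 3 (-6) * E 1 2 (-1) 4 (-4)" using gp[of 1 2 "-1" 3 4 "-4" "-6"] u242 u245 by linarith
  have pq159: "E 1 2 (-1) 4 (-4) = E (-4) (-1) 1 2 4" using s2[of 1 2 "-1" 4 "-4"] s4[of 1 "-1" 2 4 "-4"] s1[of 1 "-1" 2 "-4" 4] s3[of "-1" 1 2 "-4" 4] s2[of "-1" 1 "-4" 2 4] s1[of "-1" "-4" 1 2 4] by linarith
  have u247: "E 1 2 (-1) 4 (-4) < 0" using pq159 k_m4_m1_1_2_4 by linarith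
  have u248: "E 1 2 (-1) 3 (-6) < 0" by (rule qm2[OF u246 u247])
  have pq160: "E 1 2 (-1) 3 (-6) = E (-6) (-1) 1 2 3" using s2[of 1 2 "-1" 3 "-6"] s4[of 1 "-1" 2 3 "-6"] s1[of 1 "-1" 2 "-6" 3] s3[of "-1" 1 2 "-6" 3] s2[of "-1" 1 "-6" 2 3] s1[of "-1" "-6" 1 2 3] by linarith
  have k_m6_m1_1_2_3: "E (-6) (-1) 1 2 3 < 0" using u248 pq160 by linarith
  have pq161: "E 1 2 (-1) 3 4 = E (-1) 1 2 3 4" using s2[of 1 2 "-1" 3 4] s1[of 1 "-1" 2 3 4] by linarith
  have u249: "0 < E 1 2 (-1) 3 4" using pq161 k_m1_1_2_3_4 by linarith
  have pq162: "E 1 2 (-1) (-5) (-6) = - E (-6) (-5) (-1) 1 2" using s2[of 1 2 "-1" "-5" "-6"] s3[of 1 "-1" 2 "-5" "-6"] s4[of 1 "-1" "-5" 2 "-6"] s1[of 1 "-1" "-5" "-6" 2] s2[of "-1" 1 "-5" "-6" 2] s3[of "-1" "-5" 1 "-6" 2] s1[of "-1" "-5" "-6" 1 2] s2[of "-5" "-1" "-6" 1 2] s1[of "-5" "-6" "-1" 1 2] by linarith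
  have u250: "0 < E 1 2 (-1) (-5) (-6)" using pq162 k_m6_m5_m1_1_2 by linarith
  have u251: "0 < E 1 2 (-1) 3 4 * E 1 2 (-1) (-5) (-6)" using mult_pos_pos[OF u249 u250] .
  have pq163: "E 1 2 (-1) 3 (-6) = E (-6) (-1) 1 2 3" using s2[of 1 2 "-1" 3 "-6"] s4[of 1 "-1" 2 3 "-6"] s1[of 1 "-1" 2 "-6" 3] s3[of "-1" 1 2 "-6" 3] s2[of "-1" 1 "-6" 2 3] s1[of "-1" "-6" 1 2 3] by linarith
  have u252: "E 1 2 (-1) 3 (-6) < 0" using pq163 k_m6_m1_1_2_3 by linarith
  have pq164: "E 1 2 (-1) 4 (-5) = E (-5) (-1) 1 2 4" using s2[of 1 2 "-1" 4 "-5"] s4[of 1 "-1" 2 4 "-5"] s1[of 1 "-1" 2 "-5" 4] s3[of "-1" 1 2 "-5" 4] s2[of "-1" 1 "-5" 2 4] s1[of "-1" "-5" 1 2 4] by linarith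
  have u253: "E 1 2 (-1) 4 (-5) < 0" using pq164 k_m5_m1_1_2_4 by linarith
  have u254: "0 < E 1 2 (-1) 3 (-6) * E 1 2 (-1) 4 (-5)" using mult_neg_neg[OF u252 u253] .
  have u255: "0 < E 1 2 (-1) 3 (-5) * E 1 2 (-1) 4 (-6)" using gp[of 1 2 "-1" 3 4 "-5" "-6"] u251 u254 by linarith
  have pq165: "E 1 2 (-1) 4 (-6) = E (-6) (-1) 1 2 4" using s2[of 1 2 "-1" 4 "-6"] s4[of 1 "-1" 2 4 "-6"] s1[of 1 "-1" 2 "-6" 4] s3[of "-1" 1 2 "-6" 4] s2[of "-1" 1 "-6" 2 4] s1[of "-1" "-6" 1 2 4] by linarith
  have u256: "E 1 2 (-1) 4 (-6) < 0" using pq165 k_m6_m1_1_2_4 by linarith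
  have u257: "E 1 2 (-1) 3 (-5) < 0" by (rule qm2[OF u255 u256])
  have pq166: "E 1 2 (-1) 3 (-5) = E (-5) (-1) 1 2 3" using s2[of 1 2 "-1" 3 "-5"] s4[of 1 "-1" 2 3 "-5"] s1[of 1 "-1" 2 "-5" 3] s3[of "-1" 1 2 "-5" 3] s2[of "-1" 1 "-5" 2 3] s1[of "-1" "-5" 1 2 3] by linarith
  have k_m5_m1_1_2_3: "E (-5) (-1) 1 2 3 < 0" using u257 pq166 by linarith
  have pq167: "E 1 2 (-1) 3 (-4) = E (-4) (-1) 1 2 3" using s2[of 1 2 "-1" 3 "-4"] s4[of 1 "-1" 2 3 "-4"] s1[of 1 "-1" 2 "-4" 3] s3[of "-1" 1 2 "-4" 3] s2[of "-1" 1 "-4" 2 3] s1[of "-1" "-4" 1 2 3] by linarith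
  have u258: "E 1 2 (-1) 3 (-4) < 0" using pq167 k_m4_m1_1_2_3 by linarith
  have pq168: "E 1 2 (-1) (-5) (-6) = - E (-6) (-5) (-1) 1 2" using s2[of 1 2 "-1" "-5" "-6"] s3[of 1 "-1" 2 "-5" "-6"] s4[of 1 "-1" "-5" 2 "-6"] s1[of 1 "-1" "-5" "-6" 2] s2[of "-1" 1 "-5" "-6" 2] s3[of "-1" "-5" 1 "-6" 2] s1[of "-1" "-5" "-6" 1 2] s2[of "-5" "-1" "-6" 1 2] s1[of "-5" "-6" "-1" 1 2] by linarith
  have u259: "0 < E 1 2 (-1) (-5) (-6)" using pq168 k_m6_m5_m1_1_2 by linarith
  have u260: "E 1 2 (-1) 3 (-4) * E 1 2 (-1) (-5) (-6) < 0" using mult_neg_pos[OF u258 u259] .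
  have pq169: "E 1 2 (-1) 3 (-5) = E (-5) (-1) 1 2 3" using s2[of 1 2 "-1" 3 "-5"] s4[of 1 "-1" 2 3 "-5"] s1[of 1 "-1" 2 "-5" 3] s3[of "-1" 1 2 "-5" 3] s2[of "-1" 1 "-5" 2 3] s1[of "-1" "-5" 1 2 3] by linarith
  have u261: "E 1 2 (-1) 3 (-5) < 0" using pq169 k_m5_m1_1_2_3 by linarith
  have pq170: "E 1 2 (-1) (-4) (-6) = - E (-6) (-4) (-1) 1 2" using s2[of 1 2 "-1" "-4" "-6"] s3[of 1 "-1" 2 "-4" "-6"] s4[of 1 "-1" "-4" 2 "-6"] s1[of 1 "-1" "-4" "-6" 2] s2[of "-1" 1 "-4" "-6" 2] s3[of "-1" "-4" 1 "-6" 2] s1[of "-1" "-4" "-6" 1 2] s2[of "-4" "-1" "-6" 1 2] s1[of "-4" "-6" "-1" 1 2] by linarith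
  have u262: "E 1 2 (-1) (-4) (-6) < 0" using pq170 k_m6_m4_m1_1_2 by linarith
  have u263: "0 < E 1 2 (-1) 3 (-5) * E 1 2 (-1) (-4) (-6)" using mult_neg_neg[OF u261 u262] .
  have u264: "0 < E 1 2 (-1) 3 (-6) * E 1 2 (-1) (-4) (-5)" using gp[of 1 2 "-1" 3 "-4" "-5" "-6"] u260 u263 by linarith
  have pq171: "E 1 2 (-1) 3 (-6) = E (-6) (-1) 1 2 3" using s2[of 1 2 "-1" 3 "-6"] s4[of 1 "-1" 2 3 "-6"] s1[of 1 "-1" 2 "-6" 3] s3[of "-1" 1 2 "-6" 3] s2[of "-1" 1 "-6" 2 3] s1[of "-1" "-6" 1 2 3] by linarith
  have u265: "E 1 2 (-1) 3 (-6) < 0" using pq171 k_m6_m1_1_2_3 by linarith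
  have u266: "E 1 2 (-1) (-4) (-5) < 0" by (rule pm2[OF u264 u265])
  have pq172: "E 1 2 (-1) (-4) (-5) = - E (-5) (-4) (-1) 1 2" using s2[of 1 2 "-1" "-4" "-5"] s3[of 1 "-1" 2 "-4" "-5"] s4[of 1 "-1" "-4" 2 "-5"] s1[of 1 "-1" "-4" "-5" 2] s2[of "-1" 1 "-4" "-5" 2] s3[of "-1" "-4" 1 "-5" 2] s1[of "-1" "-4" "-5" 1 2] s2[of "-4" "-1" "-5" 1 2] s1[of "-4" "-5" "-1" 1 2] by linarith
  have k_m5_m4_m1_1_2: "0 < E (-5) (-4) (-1) 1 2" using u266 pq172 by linarith
  have pq173: "E 1 2 (-1) 4 5 = E (-1) 1 2 4 5" using s2[of 1 2 "-1" 4 5] s1[of 1 "-1" 2 4 5] by linarith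
  have u267: "E 1 2 (-1) 4 5 < 0" using pq173 k_m1_1_2_4_5 by linarith
  have pq174: "E 1 2 (-1) (-4) (-5) = - E (-5) (-4) (-1) 1 2" using s2[of 1 2 "-1" "-4" "-5"] s3[of 1 "-1" 2 "-4" "-5"] s4[of 1 "-1" "-4" 2 "-5"] s1[of 1 "-1" "-4" "-5" 2] s2[of "-1" 1 "-4" "-5" 2] s3[of "-1" "-4" 1 "-5" 2] s1[of "-1" "-4" "-5" 1 2] s2[of "-4" "-1" "-5" 1 2] s1[of "-4" "-5" "-1" 1 2] by linarith
  have u268: "E 1 2 (-1) (-4) (-5) < 0" using pq174 k_m5_m4_m1_1_2 by linarith
  have u269: "0 < E 1 2 (-1) 4 5 * E 1 2 (-1) (-4) (-5)" using mult_neg_neg[OF u267 u268] .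
  have pq175: "E 1 2 (-1) 4 (-5) = E (-5) (-1) 1 2 4" using s2[of 1 2 "-1" 4 "-5"] s4[of 1 "-1" 2 4 "-5"] s1[of 1 "-1" 2 "-5" 4] s3[of "-1" 1 2 "-5" 4] s2[of "-1" 1 "-5" 2 4] s1[of "-1" "-5" 1 2 4] by linarith
  have u270: "E 1 2 (-1) 4 (-5) < 0" using pq175 k_m5_m1_1_2_4 by linarith
  have pq176: "E 1 2 (-1) 5 (-4) = E (-4) (-1) 1 2 5" using s2[of 1 2 "-1" 5 "-4"] s4[of 1 "-1" 2 5 "-4"] s1[of 1 "-1" 2 "-4" 5] s3[of "-1" 1 2 "-4" 5] s2[of "-1" 1 "-4" 2 5] s1[of "-1" "-4" 1 2 5] by linarith
  have u271: "E 1 2 (-1) 5 (-4) < 0" using pq176 k_m4_m1_1_2_5 by linarith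
  have u272: "0 < E 1 2 (-1) 4 (-5) * E 1 2 (-1) 5 (-4)" using mult_neg_neg[OF u270 u271] .
  have u273: "0 < E 1 2 (-1) 4 (-4) * E 1 2 (-1) 5 (-5)" using gp[of 1 2 "-1" 4 5 "-4" "-5"] u269 u272 by linarith
  have pq177: "E 1 2 (-1) 4 (-4) = E (-4) (-1) 1 2 4" using s2[of 1 2 "-1" 4 "-4"] s4[of 1 "-1" 2 4 "-4"] s1[of 1 "-1" 2 "-4" 4] s3[of "-1" 1 2 "-4" 4] s2[of "-1" 1 "-4" 2 4] s1[of "-1" "-4" 1 2 4] by linarith
  have u274: "E 1 2 (-1) 4 (-4) < 0" using pq177 k_m4_m1_1_2_4 by linarith
  have u275: "E 1 2 (-1) 5 (-5) < 0" by (rule pm2[OF u273 u274])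
  have pq178: "E 1 2 (-1) 5 (-5) = E (-5) (-1) 1 2 5" using s2[of 1 2 "-1" 5 "-5"] s4[of 1 "-1" 2 5 "-5"] s1[of 1 "-1" 2 "-5" 5] s3[of "-1" 1 2 "-5" 5] s2[of "-1" 1 "-5" 2 5] s1[of "-1" "-5" 1 2 5] by linarith
  have k_m5_m1_1_2_5: "E (-5) (-1) 1 2 5 < 0" using u275 pq178 by linarith
  have pq179: "E 1 2 (-1) 4 5 = E (-1) 1 2 4 5" using s2[of 1 2 "-1" 4 5] s1[of 1 "-1" 2 4 5] by linarith
  have u276: "E 1 2 (-1) 4 5 < 0" using pq179 k_m1_1_2_4_5 by linarith
  have pq180: "E 1 2 (-1) (-4) (-6) = - E (-6) (-4) (-1) 1 2" using s2[of 1 2 "-1" "-4" "-6"] s3[of 1 "-1" 2 "-4" "-6"] s4[of 1 "-1" "-4" 2 "-6"] s1[of 1 "-1" "-4" "-6" 2] s2[of "-1" 1 "-4" "-6" 2] s3[of "-1" "-4" 1 "-6" 2] s1[of "-1" "-4" "-6" 1 2] s2[of "-4" "-1" "-6" 1 2] s1[of "-4" "-6" "-1" 1 2] by linarith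
  have u277: "E 1 2 (-1) (-4) (-6) < 0" using pq180 k_m6_m4_m1_1_2 by linarith
  have u278: "0 < E 1 2 (-1) 4 5 * E 1 2 (-1) (-4) (-6)" using mult_neg_neg[OF u276 u277] .
  have pq181: "E 1 2 (-1) 4 (-6) = E (-6) (-1) 1 2 4" using s2[of 1 2 "-1" 4 "-6"] s4[of 1 "-1" 2 4 "-6"] s1[of 1 "-1" 2 "-6" 4] s3[of "-1" 1 2 "-6" 4] s2[of "-1" 1 "-6" 2 4] s1[of "-1" "-6" 1 2 4] by linarith
  have u279: "E 1 2 (-1) 4 (-6) < 0" using pq181 k_m6_m1_1_2_4 by linarith
  have pq182: "E 1 2 (-1) 5 (-4) = E (-4) (-1) 1 2 5" using s2[of 1 2 "-1" 5 "-4"] s4[of 1 "-1" 2 5 "-4"] s1[of 1 "-1" 2 "-4" 5] s3[of "-1" 1 2 "-4" 5] s2[of "-1" 1 "-4" 2 5] s1[of "-1" "-4" 1 2 5] by linarith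
  have u280: "E 1 2 (-1) 5 (-4) < 0" using pq182 k_m4_m1_1_2_5 by linarith
  have u281: "0 < E 1 2 (-1) 4 (-6) * E 1 2 (-1) 5 (-4)" using mult_neg_neg[OF u279 u280] .
  have u282: "0 < E 1 2 (-1) 4 (-4) * E 1 2 (-1) 5 (-6)" using gp[of 1 2 "-1" 4 5 "-4" "-6"] u278 u281 by linarith
  have pq183: "E 1 2 (-1) 4 (-4) = E (-4) (-1) 1 2 4" using s2[of 1 2 "-1" 4 "-4"] s4[of 1 "-1" 2 4 "-4"] s1[of 1 "-1" 2 "-4" 4] s3[of "-1" 1 2 "-4" 4] s2[of "-1" 1 "-4" 2 4] s1[of "-1" "-4" 1 2 4] by linarith
  have u283: "E 1 2 (-1) 4 (-4) < 0" using pq183 k_m4_m1_1_2_4 by linarith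
  have u284: "E 1 2 (-1) 5 (-6) < 0" by (rule pm2[OF u282 u283])
  have pq184: "E 1 2 (-1) 5 (-6) = E (-6) (-1) 1 2 5" using s2[of 1 2 "-1" 5 "-6"] s4[of 1 "-1" 2 5 "-6"] s1[of 1 "-1" 2 "-6" 5] s3[of "-1" 1 2 "-6" 5] s2[of "-1" 1 "-6" 2 5] s1[of "-1" "-6" 1 2 5] by linarith
  have k_m6_m1_1_2_5: "E (-6) (-1) 1 2 5 < 0" using u284 pq184 by linarith
  have pq185: "E 1 3 4 2 5 = E 1 2 3 4 5" using s3[of 1 3 4 2 5] s2[of 1 3 2 4 5] by linarith
  have u285: "E 1 3 4 2 5 < 0" using pq185 k_1_2_3_4_5 by linarith
  have pq186: "E 1 3 4 6 (-3) = E (-3) 1 3 4 6" using s4[of 1 3 4 6 "-3"] s3[of 1 3 4 "-3" 6] s2[of 1 3 "-3" 4 6] s1[of 1 "-3" 3 4 6] by linarith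
  have u286: "E 1 3 4 6 (-3) < 0" using pq186 k_m3_1_3_4_6 by linarith
  have u287: "0 < E 1 3 4 2 5 * E 1 3 4 6 (-3)" using mult_neg_neg[OF u285 u286] .
  have pq187: "E 1 3 4 2 (-3) = E (-3) 1 2 3 4" using s3[of 1 3 4 2 "-3"] s4[of 1 3 2 4 "-3"] s2[of 1 3 2 "-3" 4] s3[of 1 2 3 "-3" 4] s2[of 1 2 "-3" 3 4] s1[of 1 "-3" 2 3 4] by linarith
  have u288: "0 < E 1 3 4 2 (-3)" using pq187 k_m3_1_2_3_4 by linarith
  have u289: "0 < E 1 3 4 2 (-3) * E 1 3 4 5 6" using mult_pos_pos[OF u288 k_1_3_4_5_6] .
  have u290: "0 < E 1 3 4 2 6 * E 1 3 4 5 (-3)" using gp[of 1 3 4 2 5 6 "-3"] u287 u289 by linarith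
  have pq188: "E 1 3 4 2 6 = E 1 2 3 4 6" using s3[of 1 3 4 2 6] s2[of 1 3 2 4 6] by linarith
  have u291: "E 1 3 4 2 6 < 0" using pq188 k_1_2_3_4_6 by linarith
  have u292: "E 1 3 4 5 (-3) < 0" by (rule pm2[OF u290 u291])
  have pq189: "E 1 3 4 5 (-3) = E (-3) 1 3 4 5" using s4[of 1 3 4 5 "-3"] s3[of 1 3 4 "-3" 5] s2[of 1 3 "-3" 4 5] s1[of 1 "-3" 3 4 5] by linarith
  have k_m3_1_3_4_5: "E (-3) 1 3 4 5 < 0" using u292 pq189 by linarith
  have pq190: "E 1 3 5 2 6 = E 1 2 3 5 6" using s3[of 1 3 5 2 6] s2[of 1 3 2 5 6] by linarith
  have u293: "0 < E 1 3 5 2 6" using pq190 k_1_2_3_5_6 by linarith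
  have pq191: "E 1 3 5 4 (-3) = - E (-3) 1 3 4 5" using s3[of 1 3 5 4 "-3"] s4[of 1 3 4 5 "-3"] s3[of 1 3 4 "-3" 5] s2[of 1 3 "-3" 4 5] s1[of 1 "-3" 3 4 5] by linarith
  have u294: "0 < E 1 3 5 4 (-3)" using pq191 k_m3_1_3_4_5 by linarith
  have u295: "0 < E 1 3 5 2 6 * E 1 3 5 4 (-3)" using mult_pos_pos[OF u293 u294] .
  have pq192: "E 1 3 5 2 (-3) = E (-3) 1 2 3 5" using s3[of 1 3 5 2 "-3"] s4[of 1 3 2 5 "-3"] s2[of 1 3 2 "-3" 5] s3[of 1 2 3 "-3" 5] s2[of 1 2 "-3" 3 5] s1[of 1 "-3" 2 3 5] by linarith
  have u296: "0 < E 1 3 5 2 (-3)" using pq192 k_m3_1_2_3_5 by linarith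
  have pq193: "E 1 3 5 4 6 = - E 1 3 4 5 6" using s3[of 1 3 5 4 6] by linarith
  have u297: "E 1 3 5 4 6 < 0" using pq193 k_1_3_4_5_6 by linarith
  have u298: "E 1 3 5 2 (-3) * E 1 3 5 4 6 < 0" using mult_pos_neg[OF u296 u297] .
  have u299: "0 < E 1 3 5 2 4 * E 1 3 5 6 (-3)" using gp[of 1 3 5 2 4 6 "-3"] u295 u298 by linarith
  have pq194: "E 1 3 5 2 4 = - E 1 2 3 4 5" using s3[of 1 3 5 2 4] s4[of 1 3 2 5 4] s2[of 1 3 2 4 5] by linarith
  have u300: "0 < E 1 3 5 2 4" using pq194 k_1_2_3_4_5 by linarith
  have u301: "0 < E 1 3 5 6 (-3)" by (rule pm1[OF u299 u300])
  have pq195: "E 1 3 5 6 (-3) = E (-3) 1 3 5 6" using s4[of 1 3 5 6 "-3"] s3[of 1 3 5 "-3" 6] s2[of 1 3 "-3" 5 6] s1[of 1 "-3" 3 5 6] by linarith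
  have k_m3_1_3_5_6: "0 < E (-3) 1 3 5 6" using u301 pq195 by linarith
  have pq196: "E 1 3 5 2 6 = E 1 2 3 5 6" using s3[of 1 3 5 2 6] s2[of 1 3 2 5 6] by linarith
  have u302: "0 < E 1 3 5 2 6" using pq196 k_1_2_3_5_6 by linarith
  have pq197: "E 1 3 5 4 (-6) = - E (-6) 1 3 4 5" using s3[of 1 3 5 4 "-6"] s4[of 1 3 4 5 "-6"] s3[of 1 3 4 "-6" 5] s2[of 1 3 "-6" 4 5] s1[of 1 "-6" 3 4 5] by linarith
  have u303: "0 < E 1 3 5 4 (-6)" using pq197 k_m6_1_3_4_5 by linarith
  have u304: "0 < E 1 3 5 2 6 * E 1 3 5 4 (-6)" using mult_pos_pos[OF u302 u303] .
  have pq198: "E 1 3 5 2 (-6) = E (-6) 1 2 3 5" using s3[of 1 3 5 2 "-6"] s4[of 1 3 2 5 "-6"] s2[of 1 3 2 "-6" 5] s3[of 1 2 3 "-6" 5] s2[of 1 2 "-6" 3 5] s1[of 1 "-6" 2 3 5] by linarith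
  have u305: "0 < E 1 3 5 2 (-6)" using pq198 k_m6_1_2_3_5 by linarith
  have pq199: "E 1 3 5 4 6 = - E 1 3 4 5 6" using s3[of 1 3 5 4 6] by linarith
  have u306: "E 1 3 5 4 6 < 0" using pq199 k_1_3_4_5_6 by linarith
  have u307: "E 1 3 5 2 (-6) * E 1 3 5 4 6 < 0" using mult_pos_neg[OF u305 u306] .
  have u308: "0 < E 1 3 5 2 4 * E 1 3 5 6 (-6)" using gp[of 1 3 5 2 4 6 "-6"] u304 u307 by linarith
  have pq200: "E 1 3 5 2 4 = - E 1 2 3 4 5" using s3[of 1 3 5 2 4] s4[of 1 3 2 5 4] s2[of 1 3 2 4 5] by linarith
  have u309: "0 < E 1 3 5 2 4" using pq200 k_1_2_3_4_5 by linarith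
  have u310: "0 < E 1 3 5 6 (-6)" by (rule pm1[OF u308 u309])
  have pq201: "E 1 3 5 6 (-6) = E (-6) 1 3 5 6" using s4[of 1 3 5 6 "-6"] s3[of 1 3 5 "-6" 6] s2[of 1 3 "-6" 5 6] s1[of 1 "-6" 3 5 6] by linarith
  have k_m6_1_3_5_6: "0 < E (-6) 1 3 5 6" using u310 pq201 by linarith
  have pq202: "E 1 3 5 2 6 = E 1 2 3 5 6" using s3[of 1 3 5 2 6] s2[of 1 3 2 5 6] by linarith
  have u311: "0 < E 1 3 5 2 6" using pq202 k_1_2_3_5_6 by linarith
  have pq203: "E 1 3 5 (-1) (-6) = - E (-6) (-1) 1 3 5" using s3[of 1 3 5 "-1" "-6"] s4[of 1 3 "-1" 5 "-6"] s2[of 1 3 "-1" "-6" 5] s3[of 1 "-1" 3 "-6" 5] s1[of 1 "-1" "-6" 3 5] s2[of "-1" 1 "-6" 3 5] s1[of "-1" "-6" 1 3 5] by linarith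
  have u312: "E 1 3 5 (-1) (-6) < 0" using pq203 k_m6_m1_1_3_5 by linarith
  have u313: "E 1 3 5 2 6 * E 1 3 5 (-1) (-6) < 0" using mult_pos_neg[OF u311 u312] .
  have pq204: "E 1 3 5 2 (-1) = E (-1) 1 2 3 5" using s3[of 1 3 5 2 "-1"] s4[of 1 3 2 5 "-1"] s2[of 1 3 2 "-1" 5] s3[of 1 2 3 "-1" 5] s2[of 1 2 "-1" 3 5] s1[of 1 "-1" 2 3 5] by linarith
  have u314: "0 < E 1 3 5 2 (-1)" using pq204 k_m1_1_2_3_5 by linarith
  have pq205: "E 1 3 5 6 (-6) = E (-6) 1 3 5 6" using s4[of 1 3 5 6 "-6"] s3[of 1 3 5 "-6" 6] s2[of 1 3 "-6" 5 6] s1[of 1 "-6" 3 5 6] by linarith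
  have u315: "0 < E 1 3 5 6 (-6)" using pq205 k_m6_1_3_5_6 by linarith
  have u316: "0 < E 1 3 5 2 (-1) * E 1 3 5 6 (-6)" using mult_pos_pos[OF u314 u315] .
  have u317: "0 < E 1 3 5 2 (-6) * E 1 3 5 6 (-1)" using gp[of 1 3 5 2 6 "-1" "-6"] u313 u316 by linarith
  have pq206: "E 1 3 5 2 (-6) = E (-6) 1 2 3 5" using s3[of 1 3 5 2 "-6"] s4[of 1 3 2 5 "-6"] s2[of 1 3 2 "-6" 5] s3[of 1 2 3 "-6" 5] s2[of 1 2 "-6" 3 5] s1[of 1 "-6" 2 3 5] by linarith
  have u318: "0 < E 1 3 5 2 (-6)" using pq206 k_m6_1_2_3_5 by linarith
  have u319: "0 < E 1 3 5 6 (-1)" by (rule pm1[OF u317 u318])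
  have pq207: "E 1 3 5 6 (-1) = E (-1) 1 3 5 6" using s4[of 1 3 5 6 "-1"] s3[of 1 3 5 "-1" 6] s2[of 1 3 "-1" 5 6] s1[of 1 "-1" 3 5 6] by linarith
  have k_m1_1_3_5_6: "0 < E (-1) 1 3 5 6" using u319 pq207 by linarith
  have pq208: "E 1 3 6 2 4 = - E 1 2 3 4 6" using s3[of 1 3 6 2 4] s4[of 1 3 2 6 4] s2[of 1 3 2 4 6] by linarith
  have u320: "0 < E 1 3 6 2 4" using pq208 k_1_2_3_4_6 by linarith
  have pq209: "E 1 3 6 (-3) (-5) = - E (-5) (-3) 1 3 6" using s3[of 1 3 6 "-3" "-5"] s4[of 1 3 "-3" 6 "-5"] s2[of 1 3 "-3" "-5" 6] s3[of 1 "-3" 3 "-5" 6] s1[of 1 "-3" "-5" 3 6] s2[of "-3" 1 "-5" 3 6] s1[of "-3" "-5" 1 3 6] by linarith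
  have u321: "0 < E 1 3 6 (-3) (-5)" using pq209 k_m5_m3_1_3_6 by linarith
  have u322: "0 < E 1 3 6 2 4 * E 1 3 6 (-3) (-5)" using mult_pos_pos[OF u320 u321] .
  have pq210: "E 1 3 6 2 (-5) = E (-5) 1 2 3 6" using s3[of 1 3 6 2 "-5"] s4[of 1 3 2 6 "-5"] s2[of 1 3 2 "-5" 6] s3[of 1 2 3 "-5" 6] s2[of 1 2 "-5" 3 6] s1[of 1 "-5" 2 3 6] by linarith
  have u323: "0 < E 1 3 6 2 (-5)" using pq210 k_m5_1_2_3_6 by linarith
  have pq211: "E 1 3 6 4 (-3) = - E (-3) 1 3 4 6" using s3[of 1 3 6 4 "-3"] s4[of 1 3 4 6 "-3"] s3[of 1 3 4 "-3" 6] s2[of 1 3 "-3" 4 6] s1[of 1 "-3" 3 4 6] by linarith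
  have u324: "0 < E 1 3 6 4 (-3)" using pq211 k_m3_1_3_4_6 by linarith
  have u325: "0 < E 1 3 6 2 (-5) * E 1 3 6 4 (-3)" using mult_pos_pos[OF u323 u324] .
  have u326: "0 < E 1 3 6 2 (-3) * E 1 3 6 4 (-5)" using gp[of 1 3 6 2 4 "-3" "-5"] u322 u325 by linarith
  have pq212: "E 1 3 6 2 (-3) = E (-3) 1 2 3 6" using s3[of 1 3 6 2 "-3"] s4[of 1 3 2 6 "-3"] s2[of 1 3 2 "-3" 6] s3[of 1 2 3 "-3" 6] s2[of 1 2 "-3" 3 6] s1[of 1 "-3" 2 3 6] by linarith
  have u327: "0 < E 1 3 6 2 (-3)" using pq212 k_m3_1_2_3_6 by linarith
  have u328: "0 < E 1 3 6 4 (-5)" by (rule pm1[OF u326 u327])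
  have pq213: "E 1 3 6 4 (-5) = - E (-5) 1 3 4 6" using s3[of 1 3 6 4 "-5"] s4[of 1 3 4 6 "-5"] s3[of 1 3 4 "-5" 6] s2[of 1 3 "-5" 4 6] s1[of 1 "-5" 3 4 6] by linarith
  have k_m5_1_3_4_6: "E (-5) 1 3 4 6 < 0" using u328 pq213 by linarith
  have pq214: "E 1 3 6 2 5 = - E 1 2 3 5 6" using s3[of 1 3 6 2 5] s4[of 1 3 2 6 5] s2[of 1 3 2 5 6] by linarith
  have u329: "E 1 3 6 2 5 < 0" using pq214 k_1_2_3_5_6 by linarith
  have pq215: "E 1 3 6 (-3) (-5) = - E (-5) (-3) 1 3 6" using s3[of 1 3 6 "-3" "-5"] s4[of 1 3 "-3" 6 "-5"] s2[of 1 3 "-3" "-5" 6] s3[of 1 "-3" 3 "-5" 6] s1[of 1 "-3" "-5" 3 6] s2[of "-3" 1 "-5" 3 6] s1[of "-3" "-5" 1 3 6] by linarith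
  have u330: "0 < E 1 3 6 (-3) (-5)" using pq215 k_m5_m3_1_3_6 by linarith
  have u331: "E 1 3 6 2 5 * E 1 3 6 (-3) (-5) < 0" using mult_neg_pos[OF u329 u330] .
  have pq216: "E 1 3 6 2 (-5) = E (-5) 1 2 3 6" using s3[of 1 3 6 2 "-5"] s4[of 1 3 2 6 "-5"] s2[of 1 3 2 "-5" 6] s3[of 1 2 3 "-5" 6] s2[of 1 2 "-5" 3 6] s1[of 1 "-5" 2 3 6] by linarith
  have u332: "0 < E 1 3 6 2 (-5)" using pq216 k_m5_1_2_3_6 by linarith
  have pq217: "E 1 3 6 5 (-3) = - E (-3) 1 3 5 6" using s3[of 1 3 6 5 "-3"] s4[of 1 3 5 6 "-3"] s3[of 1 3 5 "-3" 6] s2[of 1 3 "-3" 5 6] s1[of 1 "-3" 3 5 6] by linarith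
  have u333: "E 1 3 6 5 (-3) < 0" using pq217 k_m3_1_3_5_6 by linarith
  have u334: "E 1 3 6 2 (-5) * E 1 3 6 5 (-3) < 0" using mult_pos_neg[OF u332 u333] .
  have u335: "E 1 3 6 2 (-3) * E 1 3 6 5 (-5) < 0" using gp[of 1 3 6 2 5 "-3" "-5"] u331 u334 by linarith
  have pq218: "E 1 3 6 2 (-3) = E (-3) 1 2 3 6" using s3[of 1 3 6 2 "-3"] s4[of 1 3 2 6 "-3"] s2[of 1 3 2 "-3" 6] s3[of 1 2 3 "-3" 6] s2[of 1 2 "-3" 3 6] s1[of 1 "-3" 2 3 6] by linarith
  have u336: "0 < E 1 3 6 2 (-3)" using pq218 k_m3_1_2_3_6 by linarith
  have u337: "E 1 3 6 5 (-5) < 0" by (rule pm3[OF u335 u336])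
  have pq219: "E 1 3 6 5 (-5) = - E (-5) 1 3 5 6" using s3[of 1 3 6 5 "-5"] s4[of 1 3 5 6 "-5"] s3[of 1 3 5 "-5" 6] s2[of 1 3 "-5" 5 6] s1[of 1 "-5" 3 5 6] by linarith
  have k_m5_1_3_5_6: "0 < E (-5) 1 3 5 6" using u337 pq219 by linarith
  have pq220: "E 1 3 (-5) 2 4 = - E (-5) 1 2 3 4" using s2[of 1 3 "-5" 2 4] s3[of 1 "-5" 3 2 4] s1[of 1 "-5" 2 3 4] by linarith
  have u338: "E 1 3 (-5) 2 4 < 0" using pq220 k_m5_1_2_3_4 by linarith
  have pq221: "E 1 3 (-5) 5 6 = E (-5) 1 3 5 6" using s2[of 1 3 "-5" 5 6] s1[of 1 "-5" 3 5 6] by linarith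
  have u339: "0 < E 1 3 (-5) 5 6" using pq221 k_m5_1_3_5_6 by linarith
  have u340: "E 1 3 (-5) 2 4 * E 1 3 (-5) 5 6 < 0" using mult_neg_pos[OF u338 u339] .
  have pq222: "E 1 3 (-5) 2 5 = - E (-5) 1 2 3 5" using s2[of 1 3 "-5" 2 5] s3[of 1 "-5" 3 2 5] s1[of 1 "-5" 2 3 5] by linarith
  have u341: "E 1 3 (-5) 2 5 < 0" using pq222 k_m5_1_2_3_5 by linarith
  have pq223: "E 1 3 (-5) 4 6 = E (-5) 1 3 4 6" using s2[of 1 3 "-5" 4 6] s1[of 1 "-5" 3 4 6] by linarith
  have u342: "E 1 3 (-5) 4 6 < 0" using pq223 k_m5_1_3_4_6 by linarith
  have u343: "0 < E 1 3 (-5) 2 5 * E 1 3 (-5) 4 6" using mult_neg_neg[OF u341 u342] .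
  have u344: "0 < E 1 3 (-5) 2 6 * E 1 3 (-5) 4 5" using gp[of 1 3 "-5" 2 4 5 6] u340 u343 by linarith
  have pq224: "E 1 3 (-5) 2 6 = - E (-5) 1 2 3 6" using s2[of 1 3 "-5" 2 6] s3[of 1 "-5" 3 2 6] s1[of 1 "-5" 2 3 6] by linarith
  have u345: "E 1 3 (-5) 2 6 < 0" using pq224 k_m5_1_2_3_6 by linarith
  have u346: "E 1 3 (-5) 4 5 < 0" by (rule pm2[OF u344 u345])
  have pq225: "E 1 3 (-5) 4 5 = E (-5) 1 3 4 5" using s2[of 1 3 "-5" 4 5] s1[of 1 "-5" 3 4 5] by linarith
  have k_m5_1_3_4_5: "E (-5) 1 3 4 5 < 0" using u346 pq225 by linarith
  have pq226: "E 1 3 (-5) 2 5 = - E (-5) 1 2 3 5" using s2[of 1 3 "-5" 2 5] s3[of 1 "-5" 3 2 5] s1[of 1 "-5" 2 3 5] by linarith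
  have u347: "E 1 3 (-5) 2 5 < 0" using pq226 k_m5_1_2_3_5 by linarith
  have pq227: "E 1 3 (-5) 4 (-6) = E (-6) (-5) 1 3 4" using s2[of 1 3 "-5" 4 "-6"] s4[of 1 "-5" 3 4 "-6"] s1[of 1 "-5" 3 "-6" 4] s3[of "-5" 1 3 "-6" 4] s2[of "-5" 1 "-6" 3 4] s1[of "-5" "-6" 1 3 4] by linarith
  have u348: "E 1 3 (-5) 4 (-6) < 0" using pq227 k_m6_m5_1_3_4 by linarith
  have u349: "0 < E 1 3 (-5) 2 5 * E 1 3 (-5) 4 (-6)" using mult_neg_neg[OF u347 u348] .
  have pq228: "E 1 3 (-5) 2 (-6) = - E (-6) (-5) 1 2 3" using s2[of 1 3 "-5" 2 "-6"] s3[of 1 "-5" 3 2 "-6"] s4[of 1 "-5" 2 3 "-6"] s1[of 1 "-5" 2 "-6" 3] s3[of "-5" 1 2 "-6" 3] s2[of "-5" 1 "-6" 2 3] s1[of "-5" "-6" 1 2 3] by linarith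
  have u350: "0 < E 1 3 (-5) 2 (-6)" using pq228 k_m6_m5_1_2_3 by linarith
  have pq229: "E 1 3 (-5) 4 5 = E (-5) 1 3 4 5" using s2[of 1 3 "-5" 4 5] s1[of 1 "-5" 3 4 5] by linarith
  have u351: "E 1 3 (-5) 4 5 < 0" using pq229 k_m5_1_3_4_5 by linarith
  have u352: "E 1 3 (-5) 2 (-6) * E 1 3 (-5) 4 5 < 0" using mult_pos_neg[OF u350 u351] .
  have u353: "0 < E 1 3 (-5) 2 4 * E 1 3 (-5) 5 (-6)" using gp[of 1 3 "-5" 2 4 5 "-6"] u349 u352 by linarith
  have pq230: "E 1 3 (-5) 2 4 = - E (-5) 1 2 3 4" using s2[of 1 3 "-5" 2 4] s3[of 1 "-5" 3 2 4] s1[of 1 "-5" 2 3 4] by linarith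
  have u354: "E 1 3 (-5) 2 4 < 0" using pq230 k_m5_1_2_3_4 by linarith
  have u355: "E 1 3 (-5) 5 (-6) < 0" by (rule pm2[OF u353 u354])
  have pq231: "E 1 3 (-5) 5 (-6) = E (-6) (-5) 1 3 5" using s2[of 1 3 "-5" 5 "-6"] s4[of 1 "-5" 3 5 "-6"] s1[of 1 "-5" 3 "-6" 5] s3[of "-5" 1 3 "-6" 5] s2[of "-5" 1 "-6" 3 5] s1[of "-5" "-6" 1 3 5] by linarith
  have k_m6_m5_1_3_5: "E (-6) (-5) 1 3 5 < 0" using u355 pq231 by linarith
  have pq232: "E 1 5 6 2 (-1) = E (-1) 1 2 5 6" using s3[of 1 5 6 2 "-1"] s4[of 1 5 2 6 "-1"] s2[of 1 5 2 "-1" 6] s3[of 1 2 5 "-1" 6] s2[of 1 2 "-1" 5 6] s1[of 1 "-1" 2 5 6] by linarith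
  have u356: "0 < E 1 5 6 2 (-1)" using pq232 k_m1_1_2_5_6 by linarith
  have pq233: "E 1 5 6 (-2) (-3) = - E (-3) (-2) 1 5 6" using s3[of 1 5 6 "-2" "-3"] s4[of 1 5 "-2" 6 "-3"] s2[of 1 5 "-2" "-3" 6] s3[of 1 "-2" 5 "-3" 6] s1[of 1 "-2" "-3" 5 6] s2[of "-2" 1 "-3" 5 6] s1[of "-2" "-3" 1 5 6] by linarith
  have u357: "0 < E 1 5 6 (-2) (-3)" using pq233 k_m3_m2_1_5_6 by linarith
  have u358: "0 < E 1 5 6 2 (-1) * E 1 5 6 (-2) (-3)" using mult_pos_pos[OF u356 u357] .
  have pq234: "E 1 5 6 2 (-3) = E (-3) 1 2 5 6" using s3[of 1 5 6 2 "-3"] s4[of 1 5 2 6 "-3"] s2[of 1 5 2 "-3" 6] s3[of 1 2 5 "-3" 6] s2[of 1 2 "-3" 5 6] s1[of 1 "-3" 2 5 6] by linarith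
  have u359: "0 < E 1 5 6 2 (-3)" using pq234 k_m3_1_2_5_6 by linarith
  have pq235: "E 1 5 6 (-1) (-2) = - E (-2) (-1) 1 5 6" using s3[of 1 5 6 "-1" "-2"] s4[of 1 5 "-1" 6 "-2"] s2[of 1 5 "-1" "-2" 6] s3[of 1 "-1" 5 "-2" 6] s1[of 1 "-1" "-2" 5 6] s2[of "-1" 1 "-2" 5 6] s1[of "-1" "-2" 1 5 6] by linarith
  have u360: "0 < E 1 5 6 (-1) (-2)" using pq235 k_m2_m1_1_5_6 by linarith
  have u361: "0 < E 1 5 6 2 (-3) * E 1 5 6 (-1) (-2)" using mult_pos_pos[OF u359 u360] .
  have u362: "0 < E 1 5 6 2 (-2) * E 1 5 6 (-1) (-3)" using gp[of 1 5 6 2 "-1" "-2" "-3"] u358 u361 by linarith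
  have pq236: "E 1 5 6 2 (-2) = E (-2) 1 2 5 6" using s3[of 1 5 6 2 "-2"] s4[of 1 5 2 6 "-2"] s2[of 1 5 2 "-2" 6] s3[of 1 2 5 "-2" 6] s2[of 1 2 "-2" 5 6] s1[of 1 "-2" 2 5 6] by linarith
  have u363: "0 < E 1 5 6 2 (-2)" using pq236 k_m2_1_2_5_6 by linarith
  have u364: "0 < E 1 5 6 (-1) (-3)" by (rule pm1[OF u362 u363])
  have pq237: "E 1 5 6 (-1) (-3) = - E (-3) (-1) 1 5 6" using s3[of 1 5 6 "-1" "-3"] s4[of 1 5 "-1" 6 "-3"] s2[of 1 5 "-1" "-3" 6] s3[of 1 "-1" 5 "-3" 6] s1[of 1 "-1" "-3" 5 6] s2[of "-1" 1 "-3" 5 6] s1[of "-1" "-3" 1 5 6] by linarith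
  have k_m3_m1_1_5_6: "E (-3) (-1) 1 5 6 < 0" using u364 pq237 by linarith
  have pq238: "E 1 5 6 2 (-1) = E (-1) 1 2 5 6" using s3[of 1 5 6 2 "-1"] s4[of 1 5 2 6 "-1"] s2[of 1 5 2 "-1" 6] s3[of 1 2 5 "-1" 6] s2[of 1 2 "-1" 5 6] s1[of 1 "-1" 2 5 6] by linarith
  have u365: "0 < E 1 5 6 2 (-1)" using pq238 k_m1_1_2_5_6 by linarith
  have pq239: "E 1 5 6 (-3) (-5) = - E (-5) (-3) 1 5 6" using s3[of 1 5 6 "-3" "-5"] s4[of 1 5 "-3" 6 "-5"] s2[of 1 5 "-3" "-5" 6] s3[of 1 "-3" 5 "-5" 6] s1[of 1 "-3" "-5" 5 6] s2[of "-3" 1 "-5" 5 6] s1[of "-3" "-5" 1 5 6] by linarith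
  have u366: "0 < E 1 5 6 (-3) (-5)" using pq239 k_m5_m3_1_5_6 by linarith
  have u367: "0 < E 1 5 6 2 (-1) * E 1 5 6 (-3) (-5)" using mult_pos_pos[OF u365 u366] .
  have pq240: "E 1 5 6 2 (-5) = E (-5) 1 2 5 6" using s3[of 1 5 6 2 "-5"] s4[of 1 5 2 6 "-5"] s2[of 1 5 2 "-5" 6] s3[of 1 2 5 "-5" 6] s2[of 1 2 "-5" 5 6] s1[of 1 "-5" 2 5 6] by linarith
  have u368: "0 < E 1 5 6 2 (-5)" using pq240 k_m5_1_2_5_6 by linarith
  have pq241: "E 1 5 6 (-1) (-3) = - E (-3) (-1) 1 5 6" using s3[of 1 5 6 "-1" "-3"] s4[of 1 5 "-1" 6 "-3"] s2[of 1 5 "-1" "-3" 6] s3[of 1 "-1" 5 "-3" 6] s1[of 1 "-1" "-3" 5 6] s2[of "-1" 1 "-3" 5 6] s1[of "-1" "-3" 1 5 6] by linarith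
  have u369: "0 < E 1 5 6 (-1) (-3)" using pq241 k_m3_m1_1_5_6 by linarith
  have u370: "0 < E 1 5 6 2 (-5) * E 1 5 6 (-1) (-3)" using mult_pos_pos[OF u368 u369] .
  have u371: "0 < E 1 5 6 2 (-3) * E 1 5 6 (-1) (-5)" using gp[of 1 5 6 2 "-1" "-3" "-5"] u367 u370 by linarith
  have pq242: "E 1 5 6 2 (-3) = E (-3) 1 2 5 6" using s3[of 1 5 6 2 "-3"] s4[of 1 5 2 6 "-3"] s2[of 1 5 2 "-3" 6] s3[of 1 2 5 "-3" 6] s2[of 1 2 "-3" 5 6] s1[of 1 "-3" 2 5 6] by linarith
  have u372: "0 < E 1 5 6 2 (-3)" using pq242 k_m3_1_2_5_6 by linarith
  have u373: "0 < E 1 5 6 (-1) (-5)" by (rule pm1[OF u371 u372])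
  have pq243: "E 1 5 6 (-1) (-5) = - E (-5) (-1) 1 5 6" using s3[of 1 5 6 "-1" "-5"] s4[of 1 5 "-1" 6 "-5"] s2[of 1 5 "-1" "-5" 6] s3[of 1 "-1" 5 "-5" 6] s1[of 1 "-1" "-5" 5 6] s2[of "-1" 1 "-5" 5 6] s1[of "-1" "-5" 1 5 6] by linarith
  have k_m5_m1_1_5_6: "E (-5) (-1) 1 5 6 < 0" using u373 pq243 by linarith
  have pq244: "E 1 5 (-1) 2 3 = E (-1) 1 2 3 5" using s2[of 1 5 "-1" 2 3] s3[of 1 "-1" 5 2 3] s4[of 1 "-1" 2 5 3] s1[of 1 "-1" 2 3 5] by linarith
  have u374: "0 < E 1 5 (-1) 2 3" using pq244 k_m1_1_2_3_5 by linarith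
  have pq245: "E 1 5 (-1) 6 (-5) = E (-5) (-1) 1 5 6" using s2[of 1 5 "-1" 6 "-5"] s4[of 1 "-1" 5 6 "-5"] s1[of 1 "-1" 5 "-5" 6] s3[of "-1" 1 5 "-5" 6] s2[of "-1" 1 "-5" 5 6] s1[of "-1" "-5" 1 5 6] by linarith
  have u375: "E 1 5 (-1) 6 (-5) < 0" using pq245 k_m5_m1_1_5_6 by linarith
  have u376: "E 1 5 (-1) 2 3 * E 1 5 (-1) 6 (-5) < 0" using mult_pos_neg[OF u374 u375] .
  have pq246: "E 1 5 (-1) 2 (-5) = - E (-5) (-1) 1 2 5" using s2[of 1 5 "-1" 2 "-5"] s3[of 1 "-1" 5 2 "-5"] s4[of 1 "-1" 2 5 "-5"] s1[of 1 "-1" 2 "-5" 5] s3[of "-1" 1 2 "-5" 5] s2[of "-1" 1 "-5" 2 5] s1[of "-1" "-5" 1 2 5] by linarith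
  have u377: "0 < E 1 5 (-1) 2 (-5)" using pq246 k_m5_m1_1_2_5 by linarith
  have pq247: "E 1 5 (-1) 3 6 = - E (-1) 1 3 5 6" using s2[of 1 5 "-1" 3 6] s3[of 1 "-1" 5 3 6] s1[of 1 "-1" 3 5 6] by linarith
  have u378: "E 1 5 (-1) 3 6 < 0" using pq247 k_m1_1_3_5_6 by linarith
  have u379: "E 1 5 (-1) 2 (-5) * E 1 5 (-1) 3 6 < 0" using mult_pos_neg[OF u377 u378] .
  have u380: "E 1 5 (-1) 2 6 * E 1 5 (-1) 3 (-5) < 0" using gp[of 1 5 "-1" 2 3 6 "-5"] u376 u379 by linarith
  have pq248: "E 1 5 (-1) 2 6 = - E (-1) 1 2 5 6" using s2[of 1 5 "-1" 2 6] s3[of 1 "-1" 5 2 6] s1[of 1 "-1" 2 5 6] by linarith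
  have u381: "E 1 5 (-1) 2 6 < 0" using pq248 k_m1_1_2_5_6 by linarith
  have u382: "0 < E 1 5 (-1) 3 (-5)" by (rule pm4[OF u380 u381])
  have pq249: "E 1 5 (-1) 3 (-5) = - E (-5) (-1) 1 3 5" using s2[of 1 5 "-1" 3 "-5"] s3[of 1 "-1" 5 3 "-5"] s4[of 1 "-1" 3 5 "-5"] s1[of 1 "-1" 3 "-5" 5] s3[of "-1" 1 3 "-5" 5] s2[of "-1" 1 "-5" 3 5] s1[of "-1" "-5" 1 3 5] by linarith
  have k_m5_m1_1_3_5: "E (-5) (-1) 1 3 5 < 0" using u382 pq249 by linarith
  have pq250: "E 1 5 (-1) 2 (-5) = - E (-5) (-1) 1 2 5" using s2[of 1 5 "-1" 2 "-5"] s3[of 1 "-1" 5 2 "-5"] s4[of 1 "-1" 2 5 "-5"] s1[of 1 "-1" 2 "-5" 5] s3[of "-1" 1 2 "-5" 5] s2[of "-1" 1 "-5" 2 5] s1[of "-1" "-5" 1 2 5] by linarith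
  have u383: "0 < E 1 5 (-1) 2 (-5)" using pq250 k_m5_m1_1_2_5 by linarith
  have pq251: "E 1 5 (-1) 3 (-6) = - E (-6) (-1) 1 3 5" using s2[of 1 5 "-1" 3 "-6"] s3[of 1 "-1" 5 3 "-6"] s4[of 1 "-1" 3 5 "-6"] s1[of 1 "-1" 3 "-6" 5] s3[of "-1" 1 3 "-6" 5] s2[of "-1" 1 "-6" 3 5] s1[of "-1" "-6" 1 3 5] by linarith
  have u384: "E 1 5 (-1) 3 (-6) < 0" using pq251 k_m6_m1_1_3_5 by linarith
  have u385: "E 1 5 (-1) 2 (-5) * E 1 5 (-1) 3 (-6) < 0" using mult_pos_neg[OF u383 u384] .
  have pq252: "E 1 5 (-1) 2 (-6) = - E (-6) (-1) 1 2 5" using s2[of 1 5 "-1" 2 "-6"] s3[of 1 "-1" 5 2 "-6"] s4[of 1 "-1" 2 5 "-6"] s1[of 1 "-1" 2 "-6" 5] s3[of "-1" 1 2 "-6" 5] s2[of "-1" 1 "-6" 2 5] s1[of "-1" "-6" 1 2 5] by linarith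
  have u386: "0 < E 1 5 (-1) 2 (-6)" using pq252 k_m6_m1_1_2_5 by linarith
  have pq253: "E 1 5 (-1) 3 (-5) = - E (-5) (-1) 1 3 5" using s2[of 1 5 "-1" 3 "-5"] s3[of 1 "-1" 5 3 "-5"] s4[of 1 "-1" 3 5 "-5"] s1[of 1 "-1" 3 "-5" 5] s3[of "-1" 1 3 "-5" 5] s2[of "-1" 1 "-5" 3 5] s1[of "-1" "-5" 1 3 5] by linarith
  have u387: "0 < E 1 5 (-1) 3 (-5)" using pq253 k_m5_m1_1_3_5 by linarith
  have u388: "0 < E 1 5 (-1) 2 (-6) * E 1 5 (-1) 3 (-5)" using mult_pos_pos[OF u386 u387] .
  have u389: "E 1 5 (-1) 2 3 * E 1 5 (-1) (-5) (-6) < 0" using gp[of 1 5 "-1" 2 3 "-5" "-6"] u385 u388 by linarith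
  have pq254: "E 1 5 (-1) 2 3 = E (-1) 1 2 3 5" using s2[of 1 5 "-1" 2 3] s3[of 1 "-1" 5 2 3] s4[of 1 "-1" 2 5 3] s1[of 1 "-1" 2 3 5] by linarith
  have u390: "0 < E 1 5 (-1) 2 3" using pq254 k_m1_1_2_3_5 by linarith
  have u391: "E 1 5 (-1) (-5) (-6) < 0" by (rule pm3[OF u389 u390])
  have pq255: "E 1 5 (-1) (-5) (-6) = - E (-6) (-5) (-1) 1 5" using s2[of 1 5 "-1" "-5" "-6"] s3[of 1 "-1" 5 "-5" "-6"] s4[of 1 "-1" "-5" 5 "-6"] s1[of 1 "-1" "-5" "-6" 5] s2[of "-1" 1 "-5" "-6" 5] s3[of "-1" "-5" 1 "-6" 5] s1[of "-1" "-5" "-6" 1 5] s2[of "-5" "-1" "-6" 1 5] s1[of "-5" "-6" "-1" 1 5] by linarith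
  have k_m6_m5_m1_1_5: "0 < E (-6) (-5) (-1) 1 5" using u391 pq255 by linarith
  have pq256: "E 1 5 (-6) 2 3 = E (-6) 1 2 3 5" using s2[of 1 5 "-6" 2 3] s3[of 1 "-6" 5 2 3] s4[of 1 "-6" 2 5 3] s1[of 1 "-6" 2 3 5] by linarith
  have u392: "0 < E 1 5 (-6) 2 3" using pq256 k_m6_1_2_3_5 by linarith
  have pq257: "E 1 5 (-6) (-1) (-5) = - E (-6) (-5) (-1) 1 5" using s2[of 1 5 "-6" "-1" "-5"] s3[of 1 "-6" 5 "-1" "-5"] s4[of 1 "-6" "-1" 5 "-5"] s1[of 1 "-6" "-1" "-5" 5] s2[of "-6" 1 "-1" "-5" 5] s3[of "-6" "-1" 1 "-5" 5] s2[of "-6" "-1" "-5" 1 5] by linarith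
  have u393: "E 1 5 (-6) (-1) (-5) < 0" using pq257 k_m6_m5_m1_1_5 by linarith
  have u394: "E 1 5 (-6) 2 3 * E 1 5 (-6) (-1) (-5) < 0" using mult_pos_neg[OF u392 u393] .
  have pq258: "E 1 5 (-6) 2 (-1) = E (-6) (-1) 1 2 5" using s2[of 1 5 "-6" 2 "-1"] s3[of 1 "-6" 5 2 "-1"] s4[of 1 "-6" 2 5 "-1"] s1[of 1 "-6" 2 "-1" 5] s3[of "-6" 1 2 "-1" 5] s2[of "-6" 1 "-1" 2 5] by linarith
  have u395: "E 1 5 (-6) 2 (-1) < 0" using pq258 k_m6_m1_1_2_5 by linarith
  have pq259: "E 1 5 (-6) 3 (-5) = E (-6) (-5) 1 3 5" using s2[of 1 5 "-6" 3 "-5"] s3[of 1 "-6" 5 3 "-5"] s4[of 1 "-6" 3 5 "-5"] s1[of 1 "-6" 3 "-5" 5] s3[of "-6" 1 3 "-5" 5] s2[of "-6" 1 "-5" 3 5] by linarith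
  have u396: "E 1 5 (-6) 3 (-5) < 0" using pq259 k_m6_m5_1_3_5 by linarith
  have u397: "0 < E 1 5 (-6) 2 (-1) * E 1 5 (-6) 3 (-5)" using mult_neg_neg[OF u395 u396] .
  have pq260: "E 1 5 (-6) 2 (-5) = E (-6) (-5) 1 2 5" using s2[of 1 5 "-6" 2 "-5"] s3[of 1 "-6" 5 2 "-5"] s4[of 1 "-6" 2 5 "-5"] s1[of 1 "-6" 2 "-5" 5] s3[of "-6" 1 2 "-5" 5] s2[of "-6" 1 "-5" 2 5] by linarith
  have u398: "E 1 5 (-6) 2 (-5) < 0" using pq260 k_m6_m5_1_2_5 by linarith
  have pq261: "E 1 5 (-6) 3 (-1) = E (-6) (-1) 1 3 5" using s2[of 1 5 "-6" 3 "-1"] s3[of 1 "-6" 5 3 "-1"] s4[of 1 "-6" 3 5 "-1"] s1[of 1 "-6" 3 "-1" 5] s3[of "-6" 1 3 "-1" 5] s2[of "-6" 1 "-1" 3 5] by linarith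
  have u399: "0 < E 1 5 (-6) 3 (-1)" using pq261 k_m6_m1_1_3_5 by linarith
  have u400: "E 1 5 (-6) 2 (-5) * E 1 5 (-6) 3 (-1) < 0" using mult_neg_pos[OF u398 u399] .
  show False using gp[of 1 5 "-6" 2 3 "-1" "-5"] u394 u397 u400 by linarith
qed


lemma det_4:
  "det (A::'a::comm_ring_1^4^4) =
    A$1$1 * (A$2$2 * (A$3$3 * A$4$4 - A$3$4 * A$4$3) - A$2$3 * (A$3$2 * A$4$4 - A$3$4 * A$4$2) + A$2$4 * (A$3$2 * A$4$3 - A$3$3 * A$4$2))
  - A$1$2 * (A$2$1 * (A$3$3 * A$4$4 - A$3$4 * A$4$3) - A$2$3 * (A$3$1 * A$4$4 - A$3$4 * A$4$1) + A$2$4 * (A$3$1 * A$4$3 - A$3$3 * A$4$1))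
  + A$1$3 * (A$2$1 * (A$3$2 * A$4$4 - A$3$4 * A$4$2) - A$2$2 * (A$3$1 * A$4$4 - A$3$4 * A$4$1) + A$2$4 * (A$3$1 * A$4$2 - A$3$2 * A$4$1))
  - A$1$4 * (A$2$1 * (A$3$2 * A$4$3 - A$3$3 * A$4$2) - A$2$2 * (A$3$1 * A$4$3 - A$3$3 * A$4$1) + A$2$3 * (A$3$1 * A$4$2 - A$3$2 * A$4$1))"
proof -
  have f1: "finite {2::4, 3, 4}" "1 \<notin> {2::4, 3, 4}" by auto
  have f2: "finite {3::4, 4}" "2 \<notin> {3::4, 4}" by auto
  have f3: "finite {4::4}" "3 \<notin> {4::4}" by auto
  show ?thesis
    unfolding det_def UNIV_4
    unfolding sum_over_permutations_insert[OF f1]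
    unfolding sum_over_permutations_insert[OF f2]
    unfolding sum_over_permutations_insert[OF f3]
    unfolding permutes_sing
    by (simp add: sign_swap_id permutation_swap_id sign_compose permutation_compose sign_id swap_id_eq algebra_simps)
qed
definition d4 :: "real \<Rightarrow> real \<Rightarrow> real \<Rightarrow> real \<Rightarrow> real \<Rightarrow> real \<Rightarrow> real \<Rightarrow> real \<Rightarrow> real \<Rightarrow> real \<Rightarrow> real \<Rightarrow> real \<Rightarrow> real \<Rightarrow> real \<Rightarrow> real \<Rightarrow> real \<Rightarrow> real" where
"d4 a1 a2 a3 a4 b1 b2 b3 b4 c1 c2 c3 c4 e1 e2 e3 e4 =
  a1*(b2*(c3*e4-c4*e3) - b3*(c2*e4-c4*e2) + b4*(c2*e3-c3*e2))
 - a2*(b1*(c3*e4-c4*e3) - b3*(c1*e4-c4*e1) + b4*(c1*e3-c3*e1))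
 + a3*(b1*(c2*e4-c4*e2) - b2*(c1*e4-c4*e1) + b4*(c1*e2-c2*e1))
 - a4*(b1*(c2*e3-c3*e2) - b2*(c1*e3-c3*e1) + b3*(c1*e2-c2*e1))"

lemma gp: "d4 u1 u2 u3 u4 v1 v2 v3 v4 a1 a2 a3 a4 b1 b2 b3 b4 * d4 u1 u2 u3 u4 v1 v2 v3 v4 c1 c2 c3 c4 e1 e2 e3 e4
 - d4 u1 u2 u3 u4 v1 v2 v3 v4 a1 a2 a3 a4 c1 c2 c3 c4 * d4 u1 u2 u3 u4 v1 v2 v3 v4 b1 b2 b3 b4 e1 e2 e3 e4
 + d4 u1 u2 u3 u4 v1 v2 v3 v4 a1 a2 a3 a4 e1 e2 e3 e4 * d4 u1 u2 u3 u4 v1 v2 v3 v4 b1 b2 b3 b4 c1 c2 c3 c4 = 0"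
  unfolding d4_def by algebra

definition D :: "real^4 \<Rightarrow> real^4 \<Rightarrow> real^4 \<Rightarrow> real^4 \<Rightarrow> real^4 \<Rightarrow> real" where
 "D p q r s t = d4 (q$1-p$1) (q$2-p$2) (q$3-p$3) (q$4-p$4) (r$1-p$1) (r$2-p$2) (r$3-p$3) (r$4-p$4)
    (s$1-p$1) (s$2-p$2) (s$3-p$3) (s$4-p$4) (t$1-p$1) (t$2-p$2) (t$3-p$3) (t$4-p$4)"

lemma D_gp: "D x y z a b * D x y z c e - D x y z a c * D x y z b e + D x y z a e * D x y z b c = 0"
  unfolding D_def by (rule gp)

lemma d4_s1: "d4 (q1-p1) (q2-p2) (q3-p3) (q4-p4) (r1-p1) (r2-p2) (r3-p3) (r4-p4) (s1-p1) (s2-p2) (s3-p3) (s4-p4) (t1-p1) (t2-p2) (t3-p3) (t4-p4)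
  = - d4 (p1-q1) (p2-q2) (p3-q3) (p4-q4) (r1-q1) (r2-q2) (r3-q3) (r4-q4) (s1-q1) (s2-q2) (s3-q3) (s4-q4) (t1-q1) (t2-q2) (t3-q3) (t4-q4)"
  unfolding d4_def by algebra

lemma D_s1: "D p q r s t = - D q p r s t" unfolding D_def by (rule d4_s1)
lemma d4_s2: "d4 a1 a2 a3 a4 b1 b2 b3 b4 c1 c2 c3 c4 e1 e2 e3 e4 = - d4 b1 b2 b3 b4 a1 a2 a3 a4 c1 c2 c3 c4 e1 e2 e3 e4" unfolding d4_def by algebra
lemma d4_s3: "d4 a1 a2 a3 a4 b1 b2 b3 b4 c1 c2 c3 c4 e1 e2 e3 e4 = - d4 a1 a2 a3 a4 c1 c2 c3 c4 b1 b2 b3 b4 e1 e2 e3 e4" unfolding d4_def by algebra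
lemma d4_s4: "d4 a1 a2 a3 a4 b1 b2 b3 b4 c1 c2 c3 c4 e1 e2 e3 e4 = - d4 a1 a2 a3 a4 b1 b2 b3 b4 e1 e2 e3 e4 c1 c2 c3 c4" unfolding d4_def by algebra
lemma d4_aff: "d4 a1 a2 a3 a4 b1 b2 b3 b4 c1 c2 c3 c4 ((1-u)*y1+u*z1-p1) ((1-u)*y2+u*z2-p2) ((1-u)*y3+u*z3-p3) ((1-u)*y4+u*z4-p4) = (1-u) * d4 a1 a2 a3 a4 b1 b2 b3 b4 c1 c2 c3 c4 (y1-p1) (y2-p2) (y3-p3) (y4-p4) + u * d4 a1 a2 a3 a4 b1 b2 b3 b4 c1 c2 c3 c4 (z1-p1) (z2-p2) (z3-p3) (z4-p4)" unfolding d4_def by algebra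

lemma D_s2: "D p q r s t = - D p r q s t" unfolding D_def by (rule d4_s2)
lemma D_s3: "D p q r s t = - D p q s r t" unfolding D_def by (rule d4_s3)
lemma D_s4: "D p q r s t = - D p q r t s" unfolding D_def by (rule d4_s4)

lemma D_affine: "D p q r s ((1-u) *\<^sub>R y + u *\<^sub>R z) = (1-u) * D p q r s y + u * D p q r s z"
  unfolding D_def vector_add_component vector_scaleR_component real_scaleR_def by (rule d4_aff)

lemma D_nz:
  fixes p1 p2 p3 p4 y a :: "real^4"
  assumes ind: "\<not> affine_dependent {p1,p2,p3,p4}" and dist: "distinct [p1,p2,p3,p4]"
    and h1: "a \<bullet> p1 = b" and h2: "a \<bullet> p2 = b" and h3: "a \<bullet> p3 = b" and h4: "a \<bullet> p4 = b"
    and y: "a \<bullet> y < b"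
  shows "D p1 p2 p3 p4 y \<noteq> 0"
proof
  assume D0: "D p1 p2 p3 p4 y = 0"
  define N :: "real^4^4" where "N = (\<chi> i j. if i = 1 then (p2-p1)$j else if i = 2 then (p3-p1)$j else if i = 3 then (p4-p1)$j else (y-p1)$j)"
  have "det N = D p1 p2 p3 p4 y"
    unfolding det_4 N_def D_def d4_def by simp
  then have "det (transpose N) = 0" using D0 by simp
  then have "\<not> invertible (transpose N)" by (simp add: invertible_det_nz)
  then have "\<not> (\<forall>x. transpose N *v x = 0 \<longrightarrow> x = 0)"
    by (simp add: invertible_left_inverse matrix_left_invertible_ker)
  then obtain c where c0: "c \<noteq> 0" and cN: "transpose N *v c = 0" by blast
  have comb: "c$1 *\<^sub>R (p2-p1) + c$2 *\<^sub>R (p3-p1) + c$3 *\<^sub>R (p4-p1) + c$4 *\<^sub>R (y-p1) = 0"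
  proof -
    have "\<And>j. (transpose N *v c) $ j = (c$1 *\<^sub>R (p2-p1) + c$2 *\<^sub>R (p3-p1) + c$3 *\<^sub>R (p4-p1) + c$4 *\<^sub>R (y-p1)) $ j"
      by (simp add: N_def matrix_vector_mult_def transpose_def sum_4 algebra_simps)
    then show ?thesis using cN by (metis vec_eq_iff zero_index)
  qed
  have "a \<bullet> (c$1 *\<^sub>R (p2-p1) + c$2 *\<^sub>R (p3-p1) + c$3 *\<^sub>R (p4-p1) + c$4 *\<^sub>R (y-p1)) = c$4 * (a \<bullet> y - b)"
    using h1 h2 h3 h4 by (simp add: inner_add_right inner_diff_right algebra_simps)
  then have "c$4 * (a \<bullet> y - b) = 0" using comb by simp
  then have c4: "c$4 = 0" using y by simp
  have comb3: "c$1 *\<^sub>R (p2-p1) + c$2 *\<^sub>R (p3-p1) + c$3 *\<^sub>R (p4-p1) = 0" using comb c4 by simp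
  have cne: "c$1 \<noteq> 0 \<or> c$2 \<noteq> 0 \<or> c$3 \<noteq> 0" 
  proof (rule ccontr)
    assume "\<not> (c$1 \<noteq> 0 \<or> c$2 \<noteq> 0 \<or> c$3 \<noteq> 0)"
    then have "c = 0" using c4 by (simp add: vec_eq_iff forall_4)
    then show False using c0 by simp
  qed
  define U where "U v = (if v = p2 then c$1 else if v = p3 then c$2 else if v = p4 then c$3 else - (c$1 + c$2 + c$3))" for v
  have U1: "U p1 = - (c$1 + c$2 + c$3)" using dist by (auto simp: U_def)
  have U2: "U p2 = c$1" by (simp add: U_def)
  have U3: "U p3 = c$2" using dist by (auto simp: U_def)
  have U4: "U p4 = c$3" using dist by (auto simp: U_def)
  have S1: "sum U {p1,p2,p3,p4} = U p1 + U p2 + U p3 + U p4" using dist by (simp add: add.assoc)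
  have S2: "(\<Sum>v\<in>{p1,p2,p3,p4}. U v *\<^sub>R v) = U p1 *\<^sub>R p1 + U p2 *\<^sub>R p2 + U p3 *\<^sub>R p3 + U p4 *\<^sub>R p4"
    using dist by (simp add: add.assoc)
  have "affine_dependent {p1,p2,p3,p4}"
  proof (subst affine_dependent_explicit_finite, simp, intro exI conjI)
    show "sum U {p1,p2,p3,p4} = 0" unfolding S1 U1 U2 U3 U4 by simp
    show "\<exists>v\<in>{p1,p2,p3,p4}. U v \<noteq> 0" using cne U2 U3 U4 by auto
    show "(\<Sum>v\<in>{p1,p2,p3,p4}. U v *\<^sub>R v) = 0"
    proof -
      have "(\<Sum>v\<in>{p1,p2,p3,p4}. U v *\<^sub>R v) = U p1 *\<^sub>R p1 + U p2 *\<^sub>R p2 + U p3 *\<^sub>R p3 + U p4 *\<^sub>R p4"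
        by (rule S2)
      also have "\<dots> = c$1 *\<^sub>R (p2-p1) + c$2 *\<^sub>R (p3-p1) + c$3 *\<^sub>R (p4-p1)"
        unfolding U1 U2 U3 U4 by (simp add: algebra_simps)
      finally have "(\<Sum>v\<in>{p1,p2,p3,p4}. U v *\<^sub>R v) = c$1 *\<^sub>R (p2-p1) + c$2 *\<^sub>R (p3-p1) + c$3 *\<^sub>R (p4-p1)" .
      then show ?thesis using comb3 by simp
    qed
  qed
  then show False using ind by simp
qed

lemma D_same_sign:
  fixes p1 p2 p3 p4 y z a :: "real^4"
  assumes ind: "\<not> affine_dependent {p1,p2,p3,p4}" and dist: "distinct [p1,p2,p3,p4]"
    and h1: "a \<bullet> p1 = b" and h2: "a \<bullet> p2 = b" and h3: "a \<bullet> p3 = b" and h4: "a \<bullet> p4 = b"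
    and y: "a \<bullet> y < b" and z: "a \<bullet> z < b"
  shows "0 < D p1 p2 p3 p4 y * D p1 p2 p3 p4 z"
proof (rule ccontr)
  let ?f = "D p1 p2 p3 p4"
  assume "\<not> 0 < ?f y * ?f z"
  moreover have ny: "?f y \<noteq> 0" by (rule D_nz[OF ind dist h1 h2 h3 h4 y])
  moreover have nz: "?f z \<noteq> 0" by (rule D_nz[OF ind dist h1 h2 h3 h4 z])
  ultimately have neg: "?f y * ?f z < 0" by (simp add: linorder_not_less le_less)
  define u where "u = ?f y / (?f y - ?f z)"
  have dnz: "?f y - ?f z \<noteq> 0" using neg by auto
  have u01: "0 < u \<and> u < 1" using neg unfolding u_def
    by (auto simp: mult_less_0_iff divide_pos_pos divide_neg_neg field_simps)
  define w where "w = (1-u) *\<^sub>R y + u *\<^sub>R z"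
  have "a \<bullet> w = (1-u) * (a \<bullet> y) + u * (a \<bullet> z)" unfolding w_def by (simp add: inner_add_right)
  also have "\<dots> < (1-u) * b + u * b"
    using u01 y z by (intro add_less_le_mono mult_strict_left_mono mult_left_mono) auto
  finally have aw: "a \<bullet> w < b" by (simp add: algebra_simps)
  have "?f w = (1-u) * ?f y + u * ?f z" unfolding w_def by (rule D_affine)
  also have "\<dots> = 0" unfolding u_def using dnz by (simp add: field_simps)
  finally show False using D_nz[OF ind dist h1 h2 h3 h4 aw] by simp
qed

lemma facets_card_all: "\<forall>F\<in>Delta_facets. card F = 4"
  unfolding Delta_facets_lit by simp

lemma facets_card: "F \<in> Delta_facets \<Longrightarrow> card F = 4"
  using facets_card_all by blast

lemma facets_sub_all: "\<forall>F\<in>Delta_facets. F \<subseteq> Delta_vertices"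
  unfolding Delta_facets_lit Delta_vertices_def by simp

lemma facets_sub: "F \<in> Delta_facets \<Longrightarrow> F \<subseteq> Delta_vertices"
  using facets_sub_all by blast

lemma facets_antichain:
  assumes "F \<in> Delta_facets" "F' \<in> Delta_facets" "F \<subseteq> F'" shows "F = F'"
proof -
  have c: "card F = 4" "card F' = 4" using facets_card assms by auto
  then have "finite F'" by (intro card_ge_0_finite) simp
  then show ?thesis using card_subset_eq[OF _ assms(3)] c by simp
qed

lemma facet_hyperplane:
  fixes P :: "(real^4) set" and f :: "int \<Rightarrow> real^4"
  assumes sp: "simplicial_polytope P"
    and bij: "bij_betw f Delta_vertices {v. v extreme_point_of P}"
    and iso: "\<forall>S. S \<subseteq> Delta_vertices \<longrightarrow> (S \<in> Delta_faces \<longleftrightarrow> (\<exists>F. F face_of P \<and> F \<noteq> P \<and> f ` S = {v. v extreme_point_of F}))"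
    and Fc: "Fc \<in> Delta_facets"
  obtains a b where "\<forall>i\<in>Fc. a \<bullet> f i = b" "\<forall>j\<in>Delta_vertices - Fc. a \<bullet> f j < b" "\<not> affine_dependent (f ` Fc)"
proof -
  have FcV: "Fc \<subseteq> Delta_vertices" using facets_sub[OF Fc] .
  have FcK: "Fc \<in> Delta_faces" unfolding Delta_faces_def using Fc by blast
  have Fcne: "Fc \<noteq> {}" using facets_card[OF Fc] by auto
  have inj: "inj_on f Delta_vertices" using bij_betw_imp_inj_on[OF bij] .
  have img: "f ` Delta_vertices = {v. v extreme_point_of P}" using bij_betw_imp_surj_on[OF bij] .
  have polyP: "polytope P" and simpl: "\<And>F. F facet_of P \<Longrightarrow> \<exists>n. n simplex F"
    using sp unfolding simplicial_polytope_def by auto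
  have phP: "polyhedron P" using polyP by (rule polytope_imp_polyhedron)
  have "\<exists>F. F face_of P \<and> F \<noteq> P \<and> f ` Fc = {v. v extreme_point_of F}"
    by (rule iffD1[OF iso[rule_format, OF FcV] FcK])
  then obtain F0 where F0: "F0 face_of P" "F0 \<noteq> P" "f ` Fc = {v. v extreme_point_of F0}"
    by blast
  have F0ne: "F0 \<noteq> {}"
  proof
    assume "F0 = {}"
    then have "f ` Fc = {}" using F0(3) by simp
    then show False using Fcne by simp
  qed
  obtain G where G: "G facet_of P" "F0 \<subseteq> G"
    using face_of_polyhedron_subset_facet[OF phP F0(1) F0ne F0(2)] by blast
  have GP: "G face_of P" using G(1) by (rule facet_of_imp_face_of)
  have GneP: "G \<noteq> P" using G(1) by auto
  have GsubP: "G \<subseteq> P" using GP face_of_imp_subset by blast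
  define S where "S = {i \<in> Delta_vertices. f i extreme_point_of G}"
  have SV: "S \<subseteq> Delta_vertices" unfolding S_def by blast
  have fS: "f ` S = {v. v extreme_point_of G}"
  proof
    show "f ` S \<subseteq> {v. v extreme_point_of G}" unfolding S_def by blast
    show "{v. v extreme_point_of G} \<subseteq> f ` S"
    proof
      fix v assume "v \<in> {v. v extreme_point_of G}"
      then have vG: "v extreme_point_of G" by simp
      then have "v extreme_point_of P" using extreme_point_of_face[OF GP] by blast
      then obtain i where "i \<in> Delta_vertices" "v = f i" using img by blast
      then show "v \<in> f ` S" unfolding S_def using vG by blast
    qed
  qed
  have "\<exists>F. F face_of P \<and> F \<noteq> P \<and> f ` S = {v. v extreme_point_of F}"
    using GP GneP fS by blast
  then have SK: "S \<in> Delta_faces" by (rule iffD2[OF iso[rule_format, OF SV]])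
  then obtain Fc' where Fc': "Fc' \<in> Delta_facets" "S \<subseteq> Fc'" unfolding Delta_faces_def by blast
  have F0G: "F0 face_of G" using face_of_subset[OF F0(1) G(2) GsubP] .
  have FcS: "Fc \<subseteq> S"
  proof
    fix i assume i: "i \<in> Fc"
    then have "f i extreme_point_of F0" using F0(3) by blast
    then have "f i extreme_point_of G" using extreme_point_of_face[OF F0G] by blast
    then show "i \<in> S" unfolding S_def using i FcV by blast
  qed
  have "Fc = Fc'" using facets_antichain[OF Fc Fc'(1)] FcS Fc'(2) by blast
  then have SFc: "S = Fc" using FcS Fc'(2) by blast
  have extG: "{v. v extreme_point_of G} = f ` Fc" using fS SFc by simp
  obtain n where "n simplex G" using simpl G(1) by blast
  then obtain C where C: "\<not> affine_dependent C" "G = convex hull C" unfolding simplex_def by blast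
  have "{v. v extreme_point_of G} = C"
    using extreme_point_of_convex_hull_affine_independent[OF C(1)] C(2) by blast
  then have ind: "\<not> affine_dependent (f ` Fc)" using extG C(1) by simp
  obtain a b where ab: "a \<noteq> 0" "P \<subseteq> {x. a \<bullet> x \<le> b}" "G = P \<inter> {x. a \<bullet> x = b}"
    using facet_of_polyhedron[OF phP G(1)] by blast
  have on: "\<forall>i\<in>Fc. a \<bullet> f i = b"
  proof
    fix i assume "i \<in> Fc"
    then have "f i extreme_point_of G" using extG by blast
    then have "f i \<in> G" by (simp add: extreme_point_of_def)
    then show "a \<bullet> f i = b" using ab(3) by blast
  qed
  have off: "\<forall>j\<in>Delta_vertices - Fc. a \<bullet> f j < b"
  proof
    fix j assume j: "j \<in> Delta_vertices - Fc"
    then have fjP: "f j extreme_point_of P" using img by blast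
    then have "f j \<in> P" by (simp add: extreme_point_of_def)
    then have le: "a \<bullet> f j \<le> b" using ab(2) by blast
    show "a \<bullet> f j < b"
    proof (rule ccontr)
      assume "\<not> a \<bullet> f j < b"
      then have "a \<bullet> f j = b" using le by simp
      then have "f j \<in> G" using ab(3) \<open>f j \<in> P\<close> by blast
      then have "f j extreme_point_of G" using extreme_point_of_face[OF GP] fjP by blast
      then have "f j \<in> f ` Fc" using extG by blast
      then obtain i where "i \<in> Fc" "f j = f i" by blast
      then have "j = i" using inj j FcV unfolding inj_on_def by blast
      then show False using j \<open>i \<in> Fc\<close> by blast
    qed
  qed
  show ?thesis using that on off ind by blast
qed

lemma facet_fac:
  fixes P :: "(real^4) set" and f :: "int \<Rightarrow> real^4"
  assumes sp: "simplicial_polytope P"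
    and bij: "bij_betw f Delta_vertices {v. v extreme_point_of P}"
    and iso: "\<forall>S. S \<subseteq> Delta_vertices \<longrightarrow> (S \<in> Delta_faces \<longleftrightarrow> (\<exists>F. F face_of P \<and> F \<noteq> P \<and> f ` S = {v. v extreme_point_of F}))"
    and Fc: "{i1,i2,i3,i4} \<in> Delta_facets" and dist: "distinct [i1,i2,i3,i4]"
    and j: "j \<in> Delta_vertices - {i1,i2,i3,i4}" and k: "k \<in> Delta_vertices - {i1,i2,i3,i4}"
  shows "0 < D (f i1) (f i2) (f i3) (f i4) (f j) * D (f i1) (f i2) (f i3) (f i4) (f k)"
proof -
  obtain a b where on: "\<forall>i\<in>{i1,i2,i3,i4}. a \<bullet> f i = b"
     and off: "\<forall>j\<in>Delta_vertices - {i1,i2,i3,i4}. a \<bullet> f j < b"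
     and ind: "\<not> affine_dependent (f ` {i1,i2,i3,i4})"
    using facet_hyperplane[OF sp bij iso Fc] by blast
  have inj: "inj_on f Delta_vertices" using bij_betw_imp_inj_on[OF bij] .
  have sub: "{i1,i2,i3,i4} \<subseteq> Delta_vertices" using facets_sub[OF Fc] .
  have dist': "distinct [f i1, f i2, f i3, f i4]"
    using dist sub inj unfolding inj_on_def by auto
  have ind': "\<not> affine_dependent {f i1, f i2, f i3, f i4}" using ind by simp
  have h1: "a \<bullet> f i1 = b" and h2: "a \<bullet> f i2 = b" and h3: "a \<bullet> f i3 = b" and h4: "a \<bullet> f i4 = b"
    using on by auto
  have hj: "a \<bullet> f j < b" and hk: "a \<bullet> f k < b" using off j k by auto
  show ?thesis by (rule D_same_sign[OF ind' dist' h1 h2 h3 h4 hj hk])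
qed

theorem mainTheorem1:
  shows "\<not> (\<exists>P :: (real^4) set. simplicial_polytope P \<and> aff_dim P = 4 \<and>
                 boundary_complex_iso Delta_vertices Delta_faces P)"
proof
  assume "\<exists>P :: (real^4) set. simplicial_polytope P \<and> aff_dim P = 4 \<and>
                 boundary_complex_iso Delta_vertices Delta_faces P"
  then obtain P :: "(real^4) set" where sp: "simplicial_polytope P"
      and bi: "boundary_complex_iso Delta_vertices Delta_faces P" by blast
  from bi obtain f :: "int \<Rightarrow> real^4" where bij: "bij_betw f Delta_vertices {v. v extreme_point_of P}"
      and iso: "\<forall>S. S \<subseteq> Delta_vertices \<longrightarrow> (S \<in> Delta_faces \<longleftrightarrow> (\<exists>F. F face_of P \<and> F \<noteq> P \<and> f ` S = {v. v extreme_point_of F}))"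
    unfolding boundary_complex_iso_def by blast
  define E where "E a b c d e = D (f a) (f b) (f c) (f d) (f e)" for a b c d e
  have s1: "\<And>a b c d e. E a b c d e = - E b a c d e" unfolding E_def by (rule D_s1)
  have s2: "\<And>a b c d e. E a b c d e = - E a c b d e" unfolding E_def by (rule D_s2)
  have s3: "\<And>a b c d e. E a b c d e = - E a b d c e" unfolding E_def by (rule D_s3)
  have s4: "\<And>a b c d e. E a b c d e = - E a b c e d" unfolding E_def by (rule D_s4)
  have gp: "\<And>x y z a b c d. E x y z a b * E x y z c d - E x y z a c * E x y z b d + E x y z a d * E x y z b c = 0"
    unfolding E_def by (rule D_gp)
  have fac: "\<And>i1 i2 i3 i4 j k. {i1,i2,i3,i4} \<in> Delta_facets \<Longrightarrow> distinct [i1,i2,i3,i4] \<Longrightarrow>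
       j \<in> Delta_vertices - {i1,i2,i3,i4} \<Longrightarrow> k \<in> Delta_vertices - {i1,i2,i3,i4} \<Longrightarrow> 0 < E i1 i2 i3 i4 j * E i1 i2 i3 i4 k"
    unfolding E_def by (rule facet_fac[OF sp bij iso])
  have b0: "0 < E 1 2 5 6 3 * E 1 2 5 6 3" by (rule fac) (simp_all add: Delta_facets_lit Delta_vertices_def)
  have pb: "E 1 2 5 6 3 = E 1 2 3 5 6" using s4[of 1 2 5 6 3] s3[of 1 2 5 3 6] by linarith
  have nz: "E 1 2 3 5 6 \<noteq> 0" using b0 pb by auto
  show False
  proof (cases "0 < E 1 2 3 5 6")
    case True
    show False by (rule core[OF s1 s2 s3 s4 gp fac True])
  next
    case False
    then have neg: "0 < - E 1 2 3 5 6" using nz by linarith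
    have t1: "\<And>a b c d e. - E a b c d e = - (- E b a c d e)" using s1 by (metis minus_minus)
    have t2: "\<And>a b c d e. - E a b c d e = - (- E a c b d e)" using s2 by (metis minus_minus)
    have t3: "\<And>a b c d e. - E a b c d e = - (- E a b d c e)" using s3 by (metis minus_minus)
    have t4: "\<And>a b c d e. - E a b c d e = - (- E a b c e d)" using s4 by (metis minus_minus)
    have tgp: "(- E x y z a b) * (- E x y z c d) - (- E x y z a c) * (- E x y z b d) + (- E x y z a d) * (- E x y z b c) = 0"
      for x y z a b c d using gp[of x y z a b c d] by simp
    have tfac: "0 < (- E i1 i2 i3 i4 j) * (- E i1 i2 i3 i4 k)"
      if "{i1,i2,i3,i4} \<in> Delta_facets" "distinct [i1,i2,i3,i4]"
       "j \<in> Delta_vertices - {i1,i2,i3,i4}" "k \<in> Delta_vertices - {i1,i2,i3,i4}" for i1 i2 i3 i4 j k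
      using fac[OF that] by simp
    show False by (rule core[OF t1 t2 t3 t4 tgp tfac neg])
  qed
qed

end
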